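(* Let $G$ be a finite group with a cyclic maximal subgroup. Then $G$ is solvable and $G''\leq Z(G)$.
   Context: $G''=[G',G']$ is the second derived subgroup and $Z(G)$ is the center of $G$. *)

theory Defs
  imports "HOL-Algebra.Algebra"
begin

definition center_of :: "('a, 'b) monoid_scheme \<Rightarrow> 'a set" where
  "center_of G = {z \<in> carrier G. \<forall>g \<in> carrier G. z \<otimes>\<^bsub>G\<^esub> g = g \<otimes>\<^bsub>G\<^esub> z}"

definition maximal_subgroup :: "'a set \<Rightarrow> ('a, 'b) monoid_scheme \<Rightarrow> bool" where
  "maximal_subgroup H G \<longleftrightarrow> subgroup H G \<and> H \<noteq> carrier G \<and>
     (\<forall>K. subgroup K G \<and> H \<subseteq> K \<longrightarrow> K = H \<or> K = carrier G)"

end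

theory Submission
  imports Defs
begin

lemma (in group_action) fp_mod:
  assumes "finite E" "Factorial_Ring.prime (q::nat)" "order G = q ^ a"
  shows "card E mod q = card {x \<in> E. \<forall>g\<in>carrier G. \<phi> g x = x} mod q"
proof -
  interpret G: group G using group_hom group_hom.axioms(1) by auto
  define Orb where "Orb = orbits G E \<phi>"
  define F where "F = {x \<in> E. \<forall>g\<in>carrier G. \<phi> g x = x}"
  have finOrb: "finite Orb" unfolding Orb_def orbits_def using assms(1) by auto
  have orbsub: "Ob \<subseteq> E" if "Ob \<in> Orb" for Ob
    using that orbits_coverture unfolding Orb_def by blast
  have cardE: "card E = (\<Sum>Ob\<in>Orb. card Ob)"
    using disjoint_sum[OF assms(1), of "\<lambda>_. 1::nat"] unfolding Orb_def by simp
  have cardO: "card Ob = 1 \<or> q dvd card Ob" if hO: "Ob \<in> Orb" for Ob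
  proof -
    obtain x where x: "x \<in> E" "Ob = orbit G \<phi> x" using hO unfolding Orb_def orbits_def by blast
    have "card Ob dvd q ^ a" using orbit_stabilizer_theorem[OF x(1)] x(2) assms(3)
      by (metis dvd_triv_left)
    then obtain j where "j \<le> a" "card Ob = q ^ j" using divides_primepow_nat[OF assms(2)] by auto
    then show ?thesis using assms(2)
      by (cases j) auto
  qed
  define A1 where "A1 = {Ob\<in>Orb. card Ob = 1}"
  define A2 where "A2 = {Ob\<in>Orb. card Ob \<noteq> 1}"
  have Oeq: "Orb = A1 \<union> A2" unfolding A1_def A2_def by auto
  have "(\<Sum>Ob\<in>Orb. card Ob) = (\<Sum>Ob\<in>A1 \<union> A2. card Ob)" using Oeq by simp
  also have "\<dots> = (\<Sum>Ob\<in>A1. card Ob) + (\<Sum>Ob\<in>A2. card Ob)"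
    by (rule sum.union_disjoint) (use finOrb in \<open>auto simp: A1_def A2_def\<close>)
  finally have "(\<Sum>Ob\<in>Orb. card Ob) = (\<Sum>Ob\<in>A1. card Ob) + (\<Sum>Ob\<in>A2. card Ob)" .
  moreover have "(\<Sum>Ob\<in>A1. card Ob) = card A1" unfolding A1_def by simp
  moreover have "q dvd (\<Sum>Ob\<in>A2. card Ob)"
    by (rule dvd_sum) (use cardO in \<open>auto simp: A2_def\<close>)
  moreover have "card A1 = card F"
  proof -
    have "bij_betw (\<lambda>x. {x}) F A1"
    proof (rule bij_betwI')
      show "\<And>x y. x \<in> F \<Longrightarrow> y \<in> F \<Longrightarrow> ({x} = {y}) = (x = y)" by auto
      show "{x} \<in> A1" if "x \<in> F" for x
      proof -
        have "orbit G \<phi> x = {x}" using that G.one_closed unfolding orbit_def F_def by force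
        then show ?thesis using that unfolding A1_def Orb_def orbits_def F_def by force
      qed
      show "\<exists>x\<in>F. Ob = {x}" if hO: "Ob \<in> A1" for Ob
      proof -
        obtain x where x: "x \<in> E" "Ob = orbit G \<phi> x" using hO unfolding A1_def Orb_def orbits_def by blast
        have "x \<in> Ob" using orbit_refl x by auto
        moreover have "card Ob = 1" using hO A1_def by auto
        ultimately have O1: "Ob = {x}" by (metis card_1_singletonE singletonD)
        have "x \<in> F" unfolding F_def using x O1 unfolding orbit_def by auto
        then show ?thesis using O1 by blast
      qed
    qed
    then show ?thesis by (rule bij_betw_same_card[symmetric])
  qed
  ultimately have "card E = card F + (\<Sum>Ob\<in>A2. card Ob)" "q dvd (\<Sum>Ob\<in>A2. card Ob)"
    using cardE by auto
  then show ?thesis unfolding F_def[symmetric] by auto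
qed


lemma (in group) inv_mult_cancel_l [simp]:
  "x \<in> carrier G \<Longrightarrow> y \<in> carrier G \<Longrightarrow> inv x \<otimes> (x \<otimes> y) = y"
  by (simp add: m_assoc[symmetric])

lemma (in group) mult_inv_cancel_l [simp]:
  "x \<in> carrier G \<Longrightarrow> y \<in> carrier G \<Longrightarrow> x \<otimes> (inv x \<otimes> y) = y"
  by (simp add: m_assoc[symmetric])

lemma (in group) conj_inj:
  assumes "x \<in> carrier G" "a \<in> carrier G" "b \<in> carrier G" "x \<otimes> a \<otimes> y = x \<otimes> b \<otimes> y" "y \<in> carrier G"
  shows "a = b"
proof -
  have "inv x \<otimes> (x \<otimes> a \<otimes> y) \<otimes> inv y = inv x \<otimes> (x \<otimes> b \<otimes> y) \<otimes> inv y"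
    using assms(4) by simp
  then show ?thesis using assms(1,2,3,5) by (simp add: m_assoc)
qed

lemma (in group) rcos_eq_iff:
  assumes "subgroup P G" "a \<in> carrier G" "b \<in> carrier G"
  shows "(P #> a = P #> b) \<longleftrightarrow> a \<otimes> inv b \<in> P"
proof
  assume "P #> a = P #> b"
  then have "a \<in> P #> b" using rcos_self[OF assms(2,1)] by simp
  then show "a \<otimes> inv b \<in> P" using subgroup.rcos_module_imp[OF assms(1) is_group assms(3)] by simp
next
  assume "a \<otimes> inv b \<in> P"
  then have "a \<in> P #> b" using subgroup.rcos_module_rev[OF assms(1) is_group assms(3) assms(2)] by simp
  then show "P #> a = P #> b" using repr_independence[OF _ assms(3,1)] by simp
qed

lemma (in group) rcosets_cases:
  assumes "c \<in> rcosets P"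
  obtains x where "x \<in> carrier G" "c = P #> x"
  using assms unfolding RCOSETS_def by auto

lemma (in group) sylow_conj:
  assumes fin: "finite (carrier G)" and q: "Factorial_Ring.prime (q::nat)"
    and ord: "order G = q ^ a * m" and nd: "\<not> q dvd m"
    and P: "subgroup P G" "card P = q ^ a" and Q: "subgroup Q G" "card Q = q ^ a"
  shows "\<exists>x\<in>carrier G. P = (\<lambda>r. x \<otimes> r \<otimes> inv x) ` Q"
proof -
  define E where "E = rcosets P"
  define \<phi> where "\<phi> = (\<lambda>r. \<lambda>c\<in>E. c #> inv r)"
  define Q' where "Q' = G\<lparr>carrier := Q\<rparr>"
  have PS: "P \<subseteq> carrier G" using P subgroup.subset by auto
  have QS: "Q \<subseteq> carrier G" using Q subgroup.subset by auto
  have grQ: "group Q'" unfolding Q'_def using Q subgroup_imp_group by auto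
  have cE: "c #> y \<in> E" if cy: "c \<in> E" "y \<in> carrier G" for c y
  proof -
    obtain x where x: "x \<in> carrier G" "c = P #> x" using cy(1) rcosets_cases unfolding E_def by blast
    have "c #> y = P #> (x \<otimes> y)" using x coset_mult_assoc[OF PS x(1) cy(2)] by simp
    moreover have "P #> (x \<otimes> y) \<in> E" unfolding E_def using rcosetsI[OF PS] x(1) cy(2) by simp
    ultimately show ?thesis by simp
  qed
  have cES: "c \<subseteq> carrier G" if "c \<in> E" for c
    using that subgroup.rcosets_carrier[OF P(1) is_group] unfolding E_def by auto
  have bij: "\<phi> r \<in> Bij E" if "r \<in> Q" for r
  proof -
    have r: "r \<in> carrier G" using that QS by auto
    have ir: "inv r \<in> carrier G" using r by simp
    have "bij_betw (\<lambda>c. c #> inv r) E E"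
    proof (rule bij_betwI[where g="\<lambda>c. c #> r"])
      show "(\<lambda>c. c #> inv r) \<in> E \<rightarrow> E" using cE[OF _ ir] by blast
      show "(\<lambda>c. c #> r) \<in> E \<rightarrow> E" using cE[OF _ r] by blast
      show "c #> inv r #> r = c" if c: "c \<in> E" for c
        using coset_mult_assoc[OF cES[OF c] ir r] r coset_mult_one[OF cES[OF c]] by simp
      show "c #> r #> inv r = c" if c: "c \<in> E" for c
        using coset_mult_assoc[OF cES[OF c] r ir] r coset_mult_one[OF cES[OF c]] by simp
    qed
    moreover have "\<phi> r = (\<lambda>c\<in>E. c #> inv r)" unfolding \<phi>_def by simp
    ultimately show ?thesis unfolding Bij_def by simp
  qed
  have act: "group_action Q' E \<phi>"
    unfolding group_action_def
  proof (rule group_hom.intro[OF grQ group_BijGroup], unfold_locales)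
    show "\<phi> \<in> hom Q' (BijGroup E)"
    proof (rule homI)
      show "\<phi> x \<in> carrier (BijGroup E)" if xQ: "x \<in> carrier Q'" for x
      proof -
        have "x \<in> Q" using xQ unfolding Q'_def by simp
        then show ?thesis using bij unfolding BijGroup_def by simp
      qed
      show "\<phi> (x \<otimes>\<^bsub>Q'\<^esub> y) = \<phi> x \<otimes>\<^bsub>BijGroup E\<^esub> \<phi> y" if xy: "x \<in> carrier Q'" "y \<in> carrier Q'" for x y
      proof -
        have x: "x \<in> carrier G" "x \<in> Q" and y: "y \<in> carrier G" "y \<in> Q"
          using xy QS unfolding Q'_def by auto
        have bx: "\<phi> x \<in> Bij E" using bij x(2) .
        have by': "\<phi> y \<in> Bij E" using bij y(2) .
        have e1: "\<phi> x \<otimes>\<^bsub>BijGroup E\<^esub> \<phi> y = compose E (\<phi> x) (\<phi> y)"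
          using bx by' unfolding BijGroup_def by simp
        have e2: "x \<otimes>\<^bsub>Q'\<^esub> y = x \<otimes> y" unfolding Q'_def by simp
        have "\<phi> (x \<otimes> y) = compose E (\<phi> x) (\<phi> y)"
        proof
          fix c show "\<phi> (x \<otimes> y) c = compose E (\<phi> x) (\<phi> y) c"
          proof (cases "c \<in> E")
            case True
            have cS: "c \<subseteq> carrier G" using cES[OF True] .
            have "\<phi> (x \<otimes> y) c = c #> inv (x \<otimes> y)" using True unfolding \<phi>_def by simp
            also have "\<dots> = c #> (inv y \<otimes> inv x)" using x y by (simp add: inv_mult_group)
            also have "\<dots> = (c #> inv y) #> inv x" using coset_mult_assoc[OF cS] x y by simp
            also have "\<dots> = \<phi> x (\<phi> y c)" using True cE[OF True, of "inv y"] y unfolding \<phi>_def by simp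
            also have "\<dots> = compose E (\<phi> x) (\<phi> y) c" using True by (simp add: compose_def)
            finally show ?thesis .
          next
            case False
            then show ?thesis by (simp add: \<phi>_def compose_def)
          qed
        qed
        then show ?thesis using e1 e2 by simp
      qed
    qed
  qed
  have ordQ: "order Q' = q ^ a" unfolding Q'_def order_def using Q by simp
  have finE: "finite E" unfolding E_def RCOSETS_def using fin by auto
  have cardE: "card E = m"
  proof -
    have "card E * card P = order G" unfolding E_def using lagrange[OF P(1)] .
    then show ?thesis using ord P(2) q by (simp add: prime_gt_0_nat)
  qed
  have "card E mod q = card {c \<in> E. \<forall>r\<in>carrier Q'. \<phi> r c = c} mod q"
    using group_action.fp_mod[OF act finE q ordQ] .
  then have "{c \<in> E. \<forall>r\<in>carrier Q'. \<phi> r c = c} \<noteq> {}"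
    using cardE nd by (metis card.empty dvd_eq_mod_eq_0 mod_0)
  then obtain c where c: "c \<in> E" "\<forall>r\<in>Q. c #> inv r = c"
    unfolding Q'_def \<phi>_def by auto
  obtain x where x: "x \<in> carrier G" "c = P #> x" using c(1) rcosets_cases unfolding E_def by blast
  have sub: "(\<lambda>r. x \<otimes> r \<otimes> inv x) ` Q \<subseteq> P"
  proof
    fix y assume "y \<in> (\<lambda>r. x \<otimes> r \<otimes> inv x) ` Q"
    then obtain r where r: "r \<in> Q" "y = x \<otimes> r \<otimes> inv x" by auto
    have rc: "r \<in> carrier G" using r QS by auto
    have "P #> x #> inv r = P #> x" using c x r by auto
    then have "P #> (x \<otimes> inv r) = P #> x" using coset_mult_assoc[OF PS x(1)] rc by simp
    then have "(x \<otimes> inv r) \<otimes> inv x \<in> P" using rcos_eq_iff[OF P(1)] x rc by simp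
    then have "inv ((x \<otimes> inv r) \<otimes> inv x) \<in> P" by (rule subgroup.m_inv_closed[OF P(1)])
    moreover have "inv ((x \<otimes> inv r) \<otimes> inv x) = x \<otimes> r \<otimes> inv x"
      using x rc by (simp add: inv_mult_group m_assoc)
    ultimately show "y \<in> P" using r by simp
  qed
  have injc: "inj_on (\<lambda>r. x \<otimes> r \<otimes> inv x) Q"
    by (rule inj_onI) (use x QS conj_inj in blast)
  then have "card ((\<lambda>r. x \<otimes> r \<otimes> inv x) ` Q) = card P" using card_image[OF injc] Q P by simp
  then have "(\<lambda>r. x \<otimes> r \<otimes> inv x) ` Q = P"
    using card_subset_eq[OF finite_subset[OF PS fin] sub] by simp
  then show ?thesis using x by blast
qed


lemma (in group) pgroup_center:
  assumes fin: "finite (carrier G)" and q: "Factorial_Ring.prime (q::nat)"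
    and ord: "order G = q ^ a" and a: "a > 0"
  shows "\<exists>z\<in>carrier G. z \<noteq> \<one> \<and> (\<forall>y\<in>carrier G. z \<otimes> y = y \<otimes> z)"
proof -
  define F where "F = {x \<in> carrier G. \<forall>g\<in>carrier G. (\<lambda>h\<in>carrier G. g \<otimes> h \<otimes> inv g) x = x}"
  have "card (carrier G) mod q = card F mod q"
    unfolding F_def using group_action.fp_mod[OF action_by_conjugation fin q ord] .
  moreover have "q dvd card (carrier G)" using ord a unfolding order_def by (simp add: dvd_power)
  ultimately have dF: "q dvd card F" by (simp add: mod_eq_0_iff_dvd[symmetric])
  have oneF: "\<one> \<in> F" unfolding F_def by simp
  have finF: "finite F" using fin unfolding F_def by auto
  have "card F \<noteq> 1"
  proof
    assume "card F = 1" then show False using dF q by (simp add: prime_nat_iff)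
  qed
  then have "F \<noteq> {\<one>}" by auto
  then obtain z where z: "z \<in> F" "z \<noteq> \<one>" using oneF by blast
  have "z \<otimes> y = y \<otimes> z" if y: "y \<in> carrier G" for y
  proof -
    have zc: "z \<in> carrier G" using z F_def by auto
    have e: "y \<otimes> z \<otimes> inv y = z" using z(1) y zc unfolding F_def by auto
    have "z \<otimes> y = y \<otimes> z \<otimes> inv y \<otimes> y" by (simp only: e)
    also have "\<dots> = y \<otimes> z" using y zc by (simp add: m_assoc)
    finally show ?thesis by simp
  qed
  then show ?thesis using z F_def by auto
qed

lemma (in group) conj_subgroup:
  assumes "subgroup Q G" "x \<in> carrier G"
  shows "subgroup ((\<lambda>r. x \<otimes> r \<otimes> inv x) ` Q) G"
proof -
  have QS: "Q \<subseteq> carrier G" using assms subgroup.subset by auto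
  have "group_hom G G (\<lambda>r. x \<otimes> r \<otimes> inv x)"
  proof (rule group_hom.intro[OF is_group is_group], unfold_locales, rule homI)
    show "\<And>y. y \<in> carrier G \<Longrightarrow> x \<otimes> y \<otimes> inv x \<in> carrier G" using assms by simp
    show "\<And>y z. y \<in> carrier G \<Longrightarrow> z \<in> carrier G \<Longrightarrow>
      x \<otimes> (y \<otimes> z) \<otimes> inv x = x \<otimes> y \<otimes> inv x \<otimes> (x \<otimes> z \<otimes> inv x)"
      using assms by (simp add: m_assoc)
  qed
  then show ?thesis using group_hom.subgroup_img_is_subgroup assms(1) by blast
qed

lemma (in group) fpf_simple_comm:
  assumes fin: "finite (carrier G)" and hom: "\<alpha> \<in> hom G G"
    and bij: "bij_betw \<alpha> (carrier G) (carrier G)"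
    and fpf: "\<And>x. x \<in> carrier G \<Longrightarrow> \<alpha> x = x \<Longrightarrow> x = \<one>"
    and simple: "\<And>L. subgroup L G \<Longrightarrow> \<alpha> ` L = L \<Longrightarrow> L = {\<one>} \<or> L = carrier G"
  shows "\<forall>x\<in>carrier G. \<forall>y\<in>carrier G. x \<otimes> y = y \<otimes> x"
proof (cases "order G = 1")
  case True
  then have "carrier G = {\<one>}" unfolding order_def
    by (metis card_1_singletonE one_closed singletonD)
  then show ?thesis by auto
next
  case False
  interpret ah: group_hom G G \<alpha> using hom by (simp add: group_hom.intro group_hom_axioms.intro is_group)
  have ac: "\<alpha> x \<in> carrier G" if "x \<in> carrier G" for x using hom that by (simp add: hom_def)
  have inj: "inj_on \<alpha> (carrier G)" using bij bij_betw_def by auto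
  obtain q where q: "Factorial_Ring.prime (q::nat)" "q dvd order G" using prime_factor_nat[OF False] by blast
  have o0: "order G \<noteq> 0" using fin order_gt_0_iff_finite by simp
  have q1: "q \<noteq> 1" using q(1) by (metis not_prime_1)
  have nu: "\<not> is_unit q" using q1 by simp
  define a where "a = multiplicity q (order G)"
  define m where "m = order G div q ^ a"
  have ord: "order G = q ^ a * m" unfolding m_def a_def by (metis dvd_mult_div_cancel multiplicity_dvd)
  have nd: "\<not> q dvd m" unfolding m_def a_def by (rule multiplicity_decompose) (use o0 q1 in auto)
  have a0: "a > 0" unfolding a_def using q(2) multiplicity_gt_zero_iff[OF o0 nu] by simp
  obtain P where P: "subgroup P G" "card P = q ^ a" using sylow_thm[OF q(1) is_group ord fin] by auto
  have PS: "P \<subseteq> carrier G" using P subgroup.subset by auto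
  have aP: "subgroup (\<alpha> ` P) G" using ah.subgroup_img_is_subgroup P(1) by simp
  have caP: "card (\<alpha> ` P) = q ^ a" using card_image[OF inj_on_subset[OF inj PS]] P(2) by simp
  obtain k where k: "k \<in> carrier G" "\<alpha> ` P = (\<lambda>r. k \<otimes> r \<otimes> inv k) ` P"
    using sylow_conj[OF fin q(1) ord nd aP caP P] by auto
  define \<beta> where "\<beta> = (\<lambda>x. \<alpha> x \<otimes> inv x)"
  have "inj_on \<beta> (carrier G)"
  proof (rule inj_onI)
    fix x y assume x: "x \<in> carrier G" and y: "y \<in> carrier G" and e: "\<beta> x = \<beta> y"
    have "inv (\<alpha> y) \<otimes> (\<alpha> x \<otimes> inv x) \<otimes> x = inv (\<alpha> y) \<otimes> (\<alpha> y \<otimes> inv y) \<otimes> x"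
      using e unfolding \<beta>_def by (simp only:)
    then have "inv (\<alpha> y) \<otimes> \<alpha> x = inv y \<otimes> x" using x y ac by (simp add: m_assoc)
    moreover have "\<alpha> (inv y \<otimes> x) = inv (\<alpha> y) \<otimes> \<alpha> x" using x y by simp
    ultimately have "\<alpha> (inv y \<otimes> x) = inv y \<otimes> x" by simp
    then have e1: "inv y \<otimes> x = \<one>" using fpf[of "inv y \<otimes> x"] x y by simp
    have "y \<otimes> (inv y \<otimes> x) = y \<otimes> \<one>" by (simp only: e1)
    then show "x = y" using x y by simp
  qed
  moreover have "\<beta> ` carrier G \<subseteq> carrier G" unfolding \<beta>_def using ac by auto
  ultimately have "\<beta> ` carrier G = carrier G" using endo_inj_surj fin by blast
  then have "k \<in> \<beta> ` carrier G" using k(1) by simp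
  then obtain x where x: "x \<in> carrier G" "k = \<alpha> x \<otimes> inv x" unfolding \<beta>_def by blast
  define Q where "Q = (\<lambda>r. inv x \<otimes> r \<otimes> x) ` P"
  have Qsub: "subgroup Q G" unfolding Q_def using conj_subgroup[OF P(1), of "inv x"] x by simp
  have "\<alpha> ` Q = Q"
  proof -
    have "\<alpha> ` Q = (\<lambda>r. \<alpha> (inv x \<otimes> r \<otimes> x)) ` P" unfolding Q_def by (simp add: image_image)
    also have "\<dots> = (\<lambda>s. inv (\<alpha> x) \<otimes> s \<otimes> \<alpha> x) ` (\<alpha> ` P)"
      using x PS by (auto simp: image_image intro!: image_cong)
    also have "\<dots> = (\<lambda>r. inv (\<alpha> x) \<otimes> (k \<otimes> r \<otimes> inv k) \<otimes> \<alpha> x) ` P"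
      unfolding k(2) by (simp add: image_image)
    also have "\<dots> = Q" unfolding Q_def
    proof (rule image_cong[OF refl])
      fix r assume "r \<in> P"
      then have r: "r \<in> carrier G" using PS by auto
      have ax: "\<alpha> x \<in> carrier G" using ac x by simp
      show "inv (\<alpha> x) \<otimes> (k \<otimes> r \<otimes> inv k) \<otimes> \<alpha> x = inv x \<otimes> r \<otimes> x"
        unfolding x(2) using r ax x(1)
        by (simp add: m_assoc inv_mult_group)
    qed
    finally show ?thesis .
  qed
  then have "Q = {\<one>} \<or> Q = carrier G" using simple Qsub by simp
  moreover have cQ: "card Q = q ^ a"
  proof -
    have ij: "inj_on (\<lambda>r. inv x \<otimes> r \<otimes> x) P" by (rule inj_onI) (use x PS conj_inj in blast)
    show ?thesis unfolding Q_def using card_image[OF ij] P(2) by simp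
  qed
  moreover have qa1: "q ^ a \<noteq> 1" using q1 a0 by simp
  moreover have "Q \<noteq> {\<one>}"
  proof
    assume "Q = {\<one>}" then have "card Q = 1" by simp
    then show False using cQ qa1 by simp
  qed
  ultimately have QG: "Q = carrier G" by blast
  define C where "C = {z \<in> carrier G. \<forall>y\<in>carrier G. z \<otimes> y = y \<otimes> z}"
  have Csub: "subgroup C G"
  proof (rule subgroupI)
    show "C \<subseteq> carrier G" unfolding C_def by auto
    show "C \<noteq> {}" unfolding C_def using one_closed by force
    show "inv z \<in> C" if "z \<in> C" for z
    proof -
      have z: "z \<in> carrier G" "\<forall>y\<in>carrier G. z \<otimes> y = y \<otimes> z" using that C_def by auto
      have "inv z \<otimes> y = y \<otimes> inv z" if y: "y \<in> carrier G" for y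
      proof -
        have "z \<otimes> (inv y) = inv y \<otimes> z" using z y by simp
        then have "inv (z \<otimes> inv y) = inv (inv y \<otimes> z)" by simp
        moreover have "inv (z \<otimes> inv y) = y \<otimes> inv z" using z(1) y by (simp add: inv_mult_group)
        moreover have "inv (inv y \<otimes> z) = inv z \<otimes> y" using z(1) y by (simp add: inv_mult_group)
        ultimately show ?thesis by simp
      qed
      then show ?thesis using z C_def by auto
    qed
    show "z \<otimes> w \<in> C" if zw: "z \<in> C" "w \<in> C" for z w
    proof -
      have z: "z \<in> carrier G" "\<And>y. y \<in> carrier G \<Longrightarrow> z \<otimes> y = y \<otimes> z" using zw(1) C_def by auto
      have w: "w \<in> carrier G" "\<And>y. y \<in> carrier G \<Longrightarrow> w \<otimes> y = y \<otimes> w" using zw(2) C_def by auto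
      have "z \<otimes> w \<otimes> y = y \<otimes> (z \<otimes> w)" if y: "y \<in> carrier G" for y
      proof -
        have "z \<otimes> w \<otimes> y = z \<otimes> (w \<otimes> y)" using z(1) w(1) y by (simp add: m_assoc)
        also have "\<dots> = z \<otimes> (y \<otimes> w)" using w(2)[OF y] by simp
        also have "\<dots> = (z \<otimes> y) \<otimes> w" using z(1) w(1) y by (simp add: m_assoc)
        also have "\<dots> = (y \<otimes> z) \<otimes> w" using z(2)[OF y] by simp
        also have "\<dots> = y \<otimes> (z \<otimes> w)" using z(1) w(1) y by (simp add: m_assoc)
        finally show ?thesis .
      qed
      then show ?thesis using z(1) w(1) unfolding C_def by auto
    qed
  qed
  have CS: "C \<subseteq> carrier G" unfolding C_def by auto
  have "\<alpha> ` C \<subseteq> C"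
  proof
    fix w assume "w \<in> \<alpha> ` C"
    then obtain z where z: "z \<in> C" "w = \<alpha> z" by auto
    have zc: "z \<in> carrier G" using z C_def by auto
    have "\<alpha> z \<otimes> y = y \<otimes> \<alpha> z" if y: "y \<in> carrier G" for y
    proof -
      obtain y' where y': "y' \<in> carrier G" "y = \<alpha> y'" using y bij unfolding bij_betw_def by force
      have "\<alpha> z \<otimes> \<alpha> y' = \<alpha> (z \<otimes> y')" using zc y' by simp
      also have "\<dots> = \<alpha> (y' \<otimes> z)" using z y' C_def by auto
      also have "\<dots> = \<alpha> y' \<otimes> \<alpha> z" using zc y' by simp
      finally show ?thesis using y' by simp
    qed
    then show "w \<in> C" using z ac zc C_def by auto
  qed
  moreover have "card (\<alpha> ` C) = card C" using card_image[OF inj_on_subset[OF inj CS]] by simp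
  moreover have "finite C" using fin CS finite_subset by auto
  ultimately have "\<alpha> ` C = C" by (simp add: card_subset_eq)
  then have "C = {\<one>} \<or> C = carrier G" using simple Csub by simp
  moreover have "C \<noteq> {\<one>}"
  proof -
    have "order G = q ^ a" using QG cQ unfolding order_def by simp
    then obtain z where "z \<in> carrier G" "z \<noteq> \<one>" "\<forall>y\<in>carrier G. z \<otimes> y = y \<otimes> z"
      using pgroup_center[OF fin q(1) _ a0] by blast
    then show ?thesis unfolding C_def by auto
  qed
  ultimately have "C = carrier G" by simp
  then show ?thesis unfolding C_def by auto
qed


locale cmax = group G for G (structure) +
  fixes H g
  assumes fin: "finite (carrier G)"
    and Hsub: "subgroup H G"
    and Hne: "H \<noteq> carrier G"
    and Hmax: "\<And>K. subgroup K G \<Longrightarrow> H \<subseteq> K \<Longrightarrow> K = H \<or> K = carrier G"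
    and gc: "g \<in> carrier G"
    and Hg: "H = range (\<lambda>n::int. g [^] n)"
    and nn: "\<not> (H \<lhd> G)"
begin

lemma HS: "H \<subseteq> carrier G" using Hsub subgroup.subset by auto

lemma gH: "g \<in> H" unfolding Hg using gc by (metis int_pow_1 rangeI)

lemma Hcases:
  assumes "h \<in> H" obtains k where "h = g [^] (k::int)"
  using assms unfolding Hg by auto

lemma Hcomm: "a \<in> H \<Longrightarrow> b \<in> H \<Longrightarrow> a \<otimes> b = b \<otimes> a"
proof -
  assume a: "a \<in> H" and b: "b \<in> H"
  obtain i where i: "a = g [^] (i::int)" using a Hcases by blast
  obtain j where j: "b = g [^] (j::int)" using b Hcases by blast
  have "g [^] i \<otimes> g [^] j = g [^] (i + j)" using gc by (simp add: int_pow_mult)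
  also have "\<dots> = g [^] (j + i)" by (simp add: add.commute)
  also have "\<dots> = g [^] j \<otimes> g [^] i" using gc by (simp add: int_pow_mult)
  finally show ?thesis using i j by simp
qed

lemma conj_image_eq:
  assumes "x \<in> carrier G" "\<forall>h\<in>H. x \<otimes> h \<otimes> inv x \<in> H"
  shows "(\<lambda>h. x \<otimes> h \<otimes> inv x) ` H = H"
proof -
  have sub: "(\<lambda>h. x \<otimes> h \<otimes> inv x) ` H \<subseteq> H" using assms(2) by auto
  have ij: "inj_on (\<lambda>h. x \<otimes> h \<otimes> inv x) H"
    by (rule inj_onI) (use assms(1) HS conj_inj in blast)
  have "card ((\<lambda>h. x \<otimes> h \<otimes> inv x) ` H) = card H" using card_image[OF ij] .
  then show ?thesis using card_subset_eq[OF finite_subset[OF HS fin] sub] by simp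
qed

lemma self_norm:
  assumes x: "x \<in> carrier G" and inv: "\<forall>h\<in>H. x \<otimes> h \<otimes> inv x \<in> H"
  shows "x \<in> H"
proof -
  define N where "N = {y \<in> carrier G. (\<lambda>h. y \<otimes> h \<otimes> inv y) ` H = H}"
  have Nsub: "subgroup N G"
  proof (rule subgroupI)
    show "N \<subseteq> carrier G" unfolding N_def by auto
    show "N \<noteq> {}"
    proof -
      have "(\<lambda>h. \<one> \<otimes> h \<otimes> inv \<one>) ` H = H" using HS by force
      then have "\<one> \<in> N" unfolding N_def by simp
      then show ?thesis by blast
    qed
    show "inv y \<in> N" if y: "y \<in> N" for y
    proof -
      have yc: "y \<in> carrier G" and yH: "(\<lambda>h. y \<otimes> h \<otimes> inv y) ` H = H" using y N_def by auto
      have "(\<lambda>h. inv y \<otimes> h \<otimes> inv (inv y)) ` H = H"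
      proof -
        have "(\<lambda>h. inv y \<otimes> h \<otimes> y) ` H = (\<lambda>h. inv y \<otimes> h \<otimes> y) ` ((\<lambda>h. y \<otimes> h \<otimes> inv y) ` H)"
          using yH by simp
        also have "\<dots> = H" using yc HS by (force simp: image_image m_assoc)
        finally show ?thesis using yc by simp
      qed
      then show ?thesis using yc N_def by auto
    qed
    show "y \<otimes> z \<in> N" if y: "y \<in> N" and z: "z \<in> N" for y z
    proof -
      have yc: "y \<in> carrier G" and yH: "(\<lambda>h. y \<otimes> h \<otimes> inv y) ` H = H" using y N_def by auto
      have zc: "z \<in> carrier G" and zH: "(\<lambda>h. z \<otimes> h \<otimes> inv z) ` H = H" using z N_def by auto
      have "(\<lambda>h. (y \<otimes> z) \<otimes> h \<otimes> inv (y \<otimes> z)) ` H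
            = (\<lambda>h. y \<otimes> h \<otimes> inv y) ` ((\<lambda>h. z \<otimes> h \<otimes> inv z) ` H)"
        using yc zc HS by (force simp: image_image m_assoc inv_mult_group)
      also have "\<dots> = H" using yH zH by simp
      finally show ?thesis using yc zc N_def by auto
    qed
  qed
  have HN: "H \<subseteq> N"
  proof
    fix y assume y: "y \<in> H"
    then have yc: "y \<in> carrier G" using HS by auto
    have "\<forall>h\<in>H. y \<otimes> h \<otimes> inv y \<in> H"
    proof
      fix h assume "h \<in> H"
      then show "y \<otimes> h \<otimes> inv y \<in> H" using y Hsub by (simp add: subgroup.m_closed subgroup.m_inv_closed)
    qed
    then show "y \<in> N" using conj_image_eq[OF yc] yc N_def by auto
  qed
  have "N \<noteq> carrier G"
  proof
    assume NG: "N = carrier G"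
    have "\<forall>y \<in> carrier G. \<forall>h \<in> H. y \<otimes> h \<otimes> inv y \<in> H"
    proof (intro ballI)
      fix y h assume "y \<in> carrier G" "h \<in> H"
      then have "y \<in> N" using NG by simp
      then have "(\<lambda>h. y \<otimes> h \<otimes> inv y) ` H = H" using N_def by auto
      then show "y \<otimes> h \<otimes> inv y \<in> H" using \<open>h \<in> H\<close> by blast
    qed
    then have "H \<lhd> G" using normal_inv_iff Hsub by blast
    then show False using nn by simp
  qed
  then have "N = H" using Hmax[OF Nsub HN] by simp
  moreover have "x \<in> N" using conj_image_eq[OF x inv] x N_def by auto
  ultimately show ?thesis by simp
qed

lemma key:
  assumes x: "x \<in> carrier G" "x \<notin> H" and c: "c \<in> H" "inv x \<otimes> c \<otimes> x \<in> H"
  shows "c \<in> center_of G"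
proof -
  have cc: "c \<in> carrier G" using c HS by auto
  define S where "S = {y \<in> carrier G. y \<otimes> c = c \<otimes> y}"
  have Ssub: "subgroup S G"
  proof (rule subgroupI)
    show "S \<subseteq> carrier G" unfolding S_def by auto
    show "S \<noteq> {}"
    proof -
      have "\<one> \<in> S" unfolding S_def using cc by simp
      then show ?thesis by blast
    qed
    show "inv y \<in> S" if y: "y \<in> S" for y
    proof -
      have yc: "y \<in> carrier G" and e: "y \<otimes> c = c \<otimes> y" using y S_def by auto
      have "inv y \<otimes> (y \<otimes> c) \<otimes> inv y = inv y \<otimes> (c \<otimes> y) \<otimes> inv y" by (simp only: e)
      then have "c \<otimes> inv y = inv y \<otimes> c" using yc cc by (simp add: m_assoc)
      then show ?thesis using yc S_def by auto
    qed
    show "y \<otimes> z \<in> S" if y: "y \<in> S" and z: "z \<in> S" for y z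
    proof -
      have yc: "y \<in> carrier G" and ey: "y \<otimes> c = c \<otimes> y" using y S_def by auto
      have zc: "z \<in> carrier G" and ez: "z \<otimes> c = c \<otimes> z" using z S_def by auto
      have "y \<otimes> z \<otimes> c = y \<otimes> (z \<otimes> c)" using yc zc cc by (simp add: m_assoc)
      also have "\<dots> = y \<otimes> (c \<otimes> z)" by (simp only: ez)
      also have "\<dots> = (y \<otimes> c) \<otimes> z" using yc zc cc by (simp add: m_assoc)
      also have "\<dots> = (c \<otimes> y) \<otimes> z" by (simp only: ey)
      also have "\<dots> = c \<otimes> (y \<otimes> z)" using yc zc cc by (simp add: m_assoc)
      finally show ?thesis using yc zc S_def by auto
    qed
  qed
  have HS': "H \<subseteq> S" using Hcomm c(1) HS unfolding S_def by auto
  define d where "d = inv x \<otimes> c \<otimes> x"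
  have dH: "d \<in> H" using c d_def by simp
  have dc: "d \<in> carrier G" using dH HS by auto
  have cd: "c = x \<otimes> d \<otimes> inv x" unfolding d_def using x cc by (simp add: m_assoc)
  have conjS: "x \<otimes> h \<otimes> inv x \<in> S" if h: "h \<in> H" for h
  proof -
    have hc: "h \<in> carrier G" using h HS by auto
    have hd: "h \<otimes> d = d \<otimes> h" using Hcomm h dH by simp
    have "(x \<otimes> h \<otimes> inv x) \<otimes> (x \<otimes> d \<otimes> inv x) = x \<otimes> (h \<otimes> d) \<otimes> inv x"
      using x hc dc by (simp add: m_assoc)
    also have "\<dots> = x \<otimes> (d \<otimes> h) \<otimes> inv x" by (simp only: hd)
    also have "\<dots> = (x \<otimes> d \<otimes> inv x) \<otimes> (x \<otimes> h \<otimes> inv x)"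
      using x hc dc by (simp add: m_assoc)
    finally show ?thesis using x hc cd S_def by auto
  qed
  have "S \<noteq> H"
  proof
    assume "S = H"
    then have "\<forall>h\<in>H. x \<otimes> h \<otimes> inv x \<in> H" using conjS by auto
    then have "x \<in> H" using self_norm x(1) by blast
    then show False using x(2) by simp
  qed
  then have SG: "S = carrier G" using Hmax[OF Ssub HS'] by simp
  have "c \<otimes> y = y \<otimes> c" if y: "y \<in> carrier G" for y
  proof -
    have "y \<in> S" using y SG by simp
    then show ?thesis unfolding S_def by simp
  qed
  then show ?thesis unfolding center_of_def using cc by auto
qed

lemma center_sub: "center_of G \<subseteq> H"
proof
  fix z assume z: "z \<in> center_of G"
  then have zc: "z \<in> carrier G" and ez: "\<And>y. y \<in> carrier G \<Longrightarrow> z \<otimes> y = y \<otimes> z"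
    unfolding center_of_def by auto
  have "\<forall>h\<in>H. z \<otimes> h \<otimes> inv z \<in> H"
  proof
    fix h assume h: "h \<in> H"
    then have hc: "h \<in> carrier G" using HS by auto
    have "z \<otimes> h \<otimes> inv z = h \<otimes> z \<otimes> inv z" using ez[OF hc] by simp
    also have "\<dots> = h" using zc hc by (simp add: m_assoc)
    finally show "z \<otimes> h \<otimes> inv z \<in> H" using h by simp
  qed
  then show "z \<in> H" using self_norm zc by blast
qed

lemma center_subgroup: "subgroup (center_of G) G"
proof (rule subgroupI)
  show "center_of G \<subseteq> carrier G" unfolding center_of_def by auto
  show "center_of G \<noteq> {}"
  proof -
    have "\<one> \<in> center_of G" unfolding center_of_def by simp
    then show ?thesis by blast
  qed
  show "inv z \<in> center_of G" if z: "z \<in> center_of G" for z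
  proof -
    have zc: "z \<in> carrier G" and ez: "\<And>y. y \<in> carrier G \<Longrightarrow> z \<otimes> y = y \<otimes> z"
      using z unfolding center_of_def by auto
    have "inv z \<otimes> y = y \<otimes> inv z" if y: "y \<in> carrier G" for y
    proof -
      have "inv z \<otimes> (z \<otimes> y) \<otimes> inv z = inv z \<otimes> (y \<otimes> z) \<otimes> inv z" using ez[OF y] by simp
      then show ?thesis using zc y by (simp add: m_assoc)
    qed
    then show ?thesis using zc unfolding center_of_def by auto
  qed
  show "z \<otimes> w \<in> center_of G" if z: "z \<in> center_of G" and w: "w \<in> center_of G" for z w
  proof -
    have zc: "z \<in> carrier G" and ez: "\<And>y. y \<in> carrier G \<Longrightarrow> z \<otimes> y = y \<otimes> z"
      using z unfolding center_of_def by auto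
    have wc: "w \<in> carrier G" and ew: "\<And>y. y \<in> carrier G \<Longrightarrow> w \<otimes> y = y \<otimes> w"
      using w unfolding center_of_def by auto
    have "z \<otimes> w \<otimes> y = y \<otimes> (z \<otimes> w)" if y: "y \<in> carrier G" for y
    proof -
      have "z \<otimes> w \<otimes> y = z \<otimes> (w \<otimes> y)" using zc wc y by (simp add: m_assoc)
      also have "\<dots> = z \<otimes> (y \<otimes> w)" using ew[OF y] by simp
      also have "\<dots> = (z \<otimes> y) \<otimes> w" using zc wc y by (simp add: m_assoc)
      also have "\<dots> = (y \<otimes> z) \<otimes> w" using ez[OF y] by simp
      also have "\<dots> = y \<otimes> (z \<otimes> w)" using zc wc y by (simp add: m_assoc)
      finally show ?thesis .
    qed
    then show ?thesis using zc wc unfolding center_of_def by auto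
  qed
qed

lemma g_not_center: "g \<notin> center_of G"
proof
  assume gZ: "g \<in> center_of G"
  have "H \<subseteq> center_of G"
  proof
    fix h assume "h \<in> H"
    then obtain k where "h = g [^] (k::int)" using Hcases by blast
    then show "h \<in> center_of G" using subgroup_int_pow_closed[OF center_subgroup gZ] by simp
  qed
  then have "\<forall>y \<in> carrier G. \<forall>h \<in> H. y \<otimes> h \<otimes> inv y \<in> H"
  proof (intro ballI)
    fix y h assume y: "y \<in> carrier G" and h: "h \<in> H"
    have hc: "h \<in> carrier G" using h HS by auto
    have "h \<otimes> y = y \<otimes> h" using \<open>H \<subseteq> center_of G\<close> h y unfolding center_of_def by auto
    then have "y \<otimes> h \<otimes> inv y = h \<otimes> y \<otimes> inv y" by simp
    also have "\<dots> = h" using y hc by (simp add: m_assoc)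
    finally show "y \<otimes> h \<otimes> inv y \<in> H" using h by simp
  qed
  then have "H \<lhd> G" using normal_inv_iff Hsub by blast
  then show False using nn by simp
qed

end


context cmax begin

definition orb where "orb c = {c #> (g [^] (k::int)) | k. True}"
definition rho where "rho c = (SOME r. r \<in> carrier G \<and> H #> r \<in> orb c)"
definition idx where "idx c = (SOME k::int. c = H #> (rho c \<otimes> g [^] k))"
definition rep where "rep c = rho c \<otimes> g [^] idx c"
definition tf where "tf y c = rep c \<otimes> y \<otimes> inv (rep (c #> y))"

lemma rc_carrier: "c \<in> rcosets H \<Longrightarrow> c \<subseteq> carrier G"
  using subgroup.rcosets_carrier[OF Hsub is_group] by auto

lemma rc_mult: "c \<in> rcosets H \<Longrightarrow> y \<in> carrier G \<Longrightarrow> c #> y \<in> rcosets H"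
proof -
  assume c: "c \<in> rcosets H" and y: "y \<in> carrier G"
  obtain x where x: "x \<in> carrier G" "c = H #> x" using c rcosets_cases by blast
  have "c #> y = H #> (x \<otimes> y)" using x coset_mult_assoc[OF HS x(1) y] by simp
  moreover have "H #> (x \<otimes> y) \<in> rcosets H" using rcosetsI[OF HS] x(1) y by simp
  ultimately show ?thesis by simp
qed

lemma rho_prop:
  assumes c: "c \<in> rcosets H"
  shows "rho c \<in> carrier G \<and> H #> rho c \<in> orb c"
proof -
  obtain x where x: "x \<in> carrier G" "c = H #> x" using c rcosets_cases by blast
  have "c #> g [^] (0::int) = c" using rc_carrier[OF c] by simp
  then have "H #> x \<in> orb c" unfolding orb_def using x(2) by (metis (mono_tags, lifting) mem_Collect_eq)
  then have "\<exists>r. r \<in> carrier G \<and> H #> r \<in> orb c" using x(1) by blast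
  then show ?thesis unfolding rho_def by (rule someI_ex)
qed

lemma rep_prop:
  assumes c: "c \<in> rcosets H"
  shows "rep c \<in> carrier G" "c = H #> rep c"
proof -
  have r: "rho c \<in> carrier G" and o: "H #> rho c \<in> orb c" using rho_prop[OF c] by auto
  obtain k where k: "H #> rho c = c #> g [^] (k::int)" using o unfolding orb_def by blast
  have cc: "c \<subseteq> carrier G" using rc_carrier[OF c] .
  have gk: "g [^] k \<in> carrier G" "g [^] (-k) \<in> carrier G" using gc by auto
  have "H #> (rho c \<otimes> g [^] (-k)) = (H #> rho c) #> g [^] (-k)"
    using coset_mult_assoc[OF HS r gk(2)] by simp
  also have "\<dots> = c #> (g [^] k \<otimes> g [^] (-k))" using k coset_mult_assoc[OF cc gk] by simp
  also have "g [^] k \<otimes> g [^] (-k) = \<one>" using gc by (simp add: int_pow_neg)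
  finally have "c = H #> (rho c \<otimes> g [^] (-k))" using cc by simp
  then have "\<exists>k. c = H #> (rho c \<otimes> g [^] (k::int))" by blast
  then have "c = H #> (rho c \<otimes> g [^] idx c)" unfolding idx_def by (rule someI_ex)
  then show "c = H #> rep c" unfolding rep_def .
  show "rep c \<in> carrier G" unfolding rep_def using r gc by simp
qed

lemma orb_shift:
  assumes c: "c \<subseteq> carrier G"
  shows "orb (c #> g) = orb c"
proof -
  have e: "c #> g #> g [^] k = c #> g [^] (1 + k)" for k :: int
    using coset_mult_assoc[OF c gc, of "g [^] k"] gc by (simp add: int_pow_mult)
  show ?thesis
  proof
    show "orb (c #> g) \<subseteq> orb c" unfolding orb_def using e by blast
    show "orb c \<subseteq> orb (c #> g)"
    proof
      fix d assume "d \<in> orb c"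
      then obtain k where "d = c #> g [^] (k::int)" unfolding orb_def by blast
      then have "d = c #> g #> g [^] (k - 1)" using e[of "k - 1"] by simp
      then show "d \<in> orb (c #> g)" unfolding orb_def by blast
    qed
  qed
qed

lemma rho_shift: "c \<in> rcosets H \<Longrightarrow> rho (c #> g) = rho c"
  unfolding rho_def using orb_shift[OF rc_carrier] by simp

lemma tf_in:
  assumes c: "c \<in> rcosets H" and y: "y \<in> carrier G"
  shows "tf y c \<in> H"
proof -
  have cy: "c #> y \<in> rcosets H" using rc_mult[OF c y] .
  have r1: "rep c \<in> carrier G" "c = H #> rep c" using rep_prop[OF c] by auto
  have r2: "rep (c #> y) \<in> carrier G" "c #> y = H #> rep (c #> y)" using rep_prop[OF cy] by auto
  have "H #> (rep c \<otimes> y) = H #> rep (c #> y)"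
    using coset_mult_assoc[OF HS r1(1) y] r1(2) r2(2) by simp
  then show ?thesis unfolding tf_def using rcos_eq_iff[OF Hsub] r1(1) r2(1) y by simp
qed

end


context cmax begin

definition V where "V y = finprod (G\<lparr>carrier := H\<rparr>) (tf y) (rcosets H)"

lemma Hcg: "comm_group (G\<lparr>carrier := H\<rparr>)"
proof -
  interpret Hg: group "G\<lparr>carrier := H\<rparr>" using subgroup_imp_group[OF Hsub] .
  show ?thesis by (rule Hg.group_comm_groupI) (use Hcomm in simp)
qed

lemma fin_rc: "finite (rcosets H)"
proof -
  have "rcosets H \<subseteq> Pow (carrier G)" using rc_carrier by auto
  then show ?thesis using fin finite_subset by blast
qed

lemma tf_fun: "y \<in> carrier G \<Longrightarrow> tf y \<in> A \<rightarrow> carrier (G\<lparr>carrier := H\<rparr>)" if "A \<subseteq> rcosets H"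
  using tf_in that by auto

lemma V_in: "y \<in> carrier G \<Longrightarrow> V y \<in> H"
proof -
  assume y: "y \<in> carrier G"
  interpret Hc: comm_group "G\<lparr>carrier := H\<rparr>" using Hcg .
  have "V y \<in> carrier (G\<lparr>carrier := H\<rparr>)" unfolding V_def
    by (rule Hc.finprod_closed) (rule tf_fun[OF subset_refl y])
  then show ?thesis by simp
qed

lemma tf_mult:
  assumes c: "c \<in> rcosets H" and x: "x \<in> carrier G" and y: "y \<in> carrier G"
  shows "tf (x \<otimes> y) c = tf x c \<otimes> tf y (c #> x)"
proof -
  have cx: "c #> x \<in> rcosets H" using rc_mult[OF c x] .
  have cxy: "c #> x #> y \<in> rcosets H" using rc_mult[OF cx y] .
  have e: "c #> (x \<otimes> y) = c #> x #> y" using coset_mult_assoc[OF rc_carrier[OF c] x y] by simp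
  have r0: "rep c \<in> carrier G" using rep_prop[OF c] by simp
  have r1: "rep (c #> x) \<in> carrier G" using rep_prop[OF cx] by simp
  have r2: "rep (c #> x #> y) \<in> carrier G" using rep_prop[OF cxy] by simp
  have "tf (x \<otimes> y) c = rep c \<otimes> (x \<otimes> y) \<otimes> inv (rep (c #> x #> y))"
    unfolding tf_def e ..
  also have "\<dots> = (rep c \<otimes> x \<otimes> inv (rep (c #> x))) \<otimes> (rep (c #> x) \<otimes> y \<otimes> inv (rep (c #> x #> y)))"
    using r0 r1 r2 x y by (simp add: m_assoc)
  finally show ?thesis unfolding tf_def .
qed

lemma V_mult:
  assumes x: "x \<in> carrier G" and y: "y \<in> carrier G"
  shows "V (x \<otimes> y) = V x \<otimes> V y"
proof -
  interpret Hc: comm_group "G\<lparr>carrier := H\<rparr>" using Hcg .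
  define sh where "sh = (\<lambda>c. c #> x)"
  have img: "sh ` (rcosets H) = rcosets H"
  proof
    show "sh ` (rcosets H) \<subseteq> rcosets H" unfolding sh_def using rc_mult x by auto
    show "rcosets H \<subseteq> sh ` (rcosets H)"
    proof
      fix d assume d: "d \<in> rcosets H"
      have "d #> inv x #> x = d" using coset_mult_assoc[OF rc_carrier[OF d], of "inv x" x] x rc_carrier[OF d]
        by simp
      moreover have "d #> inv x \<in> rcosets H" using rc_mult[OF d] x by simp
      ultimately show "d \<in> sh ` (rcosets H)" unfolding sh_def by (metis image_eqI)
    qed
  qed
  have inj: "inj_on sh (rcosets H)"
  proof (rule inj_onI)
    fix c d assume c: "c \<in> rcosets H" and d: "d \<in> rcosets H" and e: "sh c = sh d"
    have "c = c #> x #> inv x" using coset_mult_assoc[OF rc_carrier[OF c], of x "inv x"] x rc_carrier[OF c]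
      by simp
    also have "\<dots> = d #> x #> inv x" using e unfolding sh_def by simp
    also have "\<dots> = d" using coset_mult_assoc[OF rc_carrier[OF d], of x "inv x"] x rc_carrier[OF d]
      by simp
    finally show "c = d" .
  qed
  have f1: "tf x \<in> rcosets H \<rightarrow> carrier (G\<lparr>carrier := H\<rparr>)" using tf_fun[OF subset_refl x] .
  have f2: "(\<lambda>c. tf y (c #> x)) \<in> rcosets H \<rightarrow> carrier (G\<lparr>carrier := H\<rparr>)"
    using tf_in rc_mult x y by auto
  have f3: "tf y \<in> sh ` (rcosets H) \<rightarrow> carrier (G\<lparr>carrier := H\<rparr>)" using img tf_fun[OF subset_refl y] by simp
  have "V (x \<otimes> y) = finprod (G\<lparr>carrier := H\<rparr>) (\<lambda>c. tf x c \<otimes>\<^bsub>G\<lparr>carrier := H\<rparr>\<^esub> tf y (c #> x)) (rcosets H)"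
    unfolding V_def
  proof (rule Hc.finprod_cong')
    show "(\<lambda>c. tf x c \<otimes>\<^bsub>G\<lparr>carrier := H\<rparr>\<^esub> tf y (c #> x)) \<in> rcosets H \<rightarrow> carrier (G\<lparr>carrier := H\<rparr>)"
    proof
      fix c assume c: "c \<in> rcosets H"
      have "tf x c \<in> H" "tf y (c #> x) \<in> H" using tf_in[OF c x] tf_in[OF rc_mult[OF c x] y] by auto
      then show "tf x c \<otimes>\<^bsub>G\<lparr>carrier := H\<rparr>\<^esub> tf y (c #> x) \<in> carrier (G\<lparr>carrier := H\<rparr>)"
        using Hsub by (simp add: subgroup.m_closed)
    qed
    show "tf (x \<otimes> y) i = tf x i \<otimes>\<^bsub>G\<lparr>carrier := H\<rparr>\<^esub> tf y (i #> x)" if "i \<in> rcosets H" for i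
      using tf_mult[OF that x y] by simp
  qed simp
  also have "\<dots> = V x \<otimes>\<^bsub>G\<lparr>carrier := H\<rparr>\<^esub> finprod (G\<lparr>carrier := H\<rparr>) (\<lambda>c. tf y (c #> x)) (rcosets H)"
    unfolding V_def using Hc.finprod_multf[OF f1 f2] .
  also have "finprod (G\<lparr>carrier := H\<rparr>) (\<lambda>c. tf y (c #> x)) (rcosets H) = V y"
    unfolding V_def using Hc.finprod_reindex[OF f3 inj] img unfolding sh_def by simp
  finally show ?thesis by simp
qed

lemma V_hom: "V \<in> hom G G"
proof (rule homI)
  show "\<And>x. x \<in> carrier G \<Longrightarrow> V x \<in> carrier G" using V_in HS by auto
  show "\<And>x y. x \<in> carrier G \<Longrightarrow> y \<in> carrier G \<Longrightarrow> V (x \<otimes> y) = V x \<otimes> V y" using V_mult by simp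
qed

lemma finprod_center:
  assumes "finite A" "\<And>a. a \<in> A \<Longrightarrow> f a \<in> center_of G"
  shows "finprod (G\<lparr>carrier := H\<rparr>) f A \<in> center_of G"
  using assms
proof (induction A rule: finite_induct)
  case empty
  interpret Hc: comm_group "G\<lparr>carrier := H\<rparr>" using Hcg .
  show ?case using subgroup.one_closed[OF center_subgroup] by simp
next
  case (insert a A)
  interpret Hc: comm_group "G\<lparr>carrier := H\<rparr>" using Hcg .
  have fA: "f \<in> A \<rightarrow> carrier (G\<lparr>carrier := H\<rparr>)" using insert.prems center_sub by auto
  have fa: "f a \<in> carrier (G\<lparr>carrier := H\<rparr>)" using insert.prems center_sub by auto
  have "finprod (G\<lparr>carrier := H\<rparr>) f (insert a A) = f a \<otimes> finprod (G\<lparr>carrier := H\<rparr>) f A"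
    using Hc.finprod_insert[OF insert.hyps(1,2) fA fa] by simp
  moreover have "finprod (G\<lparr>carrier := H\<rparr>) f A \<in> center_of G" using insert.IH insert.prems by simp
  moreover have "f a \<in> center_of G" using insert.prems by simp
  ultimately show ?case using subgroup.m_closed[OF center_subgroup] by simp
qed

lemma tf_g_H: "tf g H = g"
proof -
  have HH: "H \<in> rcosets H" using rcosetsI[OF HS one_closed] HS by simp
  have r: "rep H \<in> carrier G" "H = H #> rep H" using rep_prop[OF HH] by auto
  have "H #> rep H = H #> \<one>" using r(2) HS by simp
  then have rH: "rep H \<in> H" using rcos_eq_iff[OF Hsub r(1) one_closed] r(1) by simp
  have Hg': "H #> g = H" using subgroup.rcos_const[OF Hsub is_group gH] .
  have "tf g H = rep H \<otimes> g \<otimes> inv (rep H)" unfolding tf_def Hg' ..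
  also have "\<dots> = g \<otimes> rep H \<otimes> inv (rep H)" using Hcomm[OF rH gH] by simp
  also have "\<dots> = g" using gc r(1) by (simp add: m_assoc)
  finally show ?thesis .
qed

lemma tf_g_other:
  assumes c: "c \<in> rcosets H" and cH: "c \<noteq> H"
  shows "tf g c \<in> center_of G"
proof -
  have cg: "c #> g \<in> rcosets H" using rc_mult[OF c gc] .
  define r where "r = rho c"
  have rc: "r \<in> carrier G" unfolding r_def using rho_prop[OF c] by simp
  have rcg: "rho (c #> g) = r" unfolding r_def using rho_shift[OF c] .
  define i where "i = idx c"
  define j where "j = idx (c #> g)"
  have rep1: "rep c = r \<otimes> g [^] i" unfolding rep_def r_def i_def ..
  have rep2: "rep (c #> g) = r \<otimes> g [^] j" unfolding rep_def j_def rcg ..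
  have gi: "g [^] i \<in> H" and gj: "g [^] j \<in> H" using subgroup_int_pow_closed[OF Hsub gH] by auto
  have gic: "g [^] i \<in> carrier G" and gjc: "g [^] j \<in> carrier G" using gc by auto
  define w where "w = g [^] i \<otimes> g \<otimes> inv (g [^] j)"
  have wH: "w \<in> H" unfolding w_def using gi gj gH Hsub by (simp add: subgroup.m_closed subgroup.m_inv_closed)
  have wc: "w \<in> carrier G" using wH HS by auto
  have tfw: "tf g c = r \<otimes> w \<otimes> inv r"
    unfolding tf_def rep1 rep2 w_def using rc gc gic gjc by (simp add: m_assoc inv_mult_group)
  have rH: "r \<notin> H"
  proof
    assume "r \<in> H"
    then have "rep c \<in> H" unfolding rep1 using gi Hsub by (simp add: subgroup.m_closed)
    then have "H #> rep c = H" using subgroup.rcos_const[OF Hsub is_group] by simp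
    then show False using rep_prop(2)[OF c] cH by simp
  qed
  have irH: "inv r \<notin> H"
  proof
    assume "inv r \<in> H"
    then have "inv (inv r) \<in> H" using Hsub by (simp add: subgroup.m_inv_closed)
    then show False using rH rc by simp
  qed
  have "tf g c \<in> H" using tf_in[OF c gc] .
  then have "inv (inv r) \<otimes> w \<otimes> inv r \<in> H" using tfw rc by simp
  then have wZ: "w \<in> center_of G" using key[OF _ irH wH] rc by simp
  then have "w \<otimes> r = r \<otimes> w" using rc unfolding center_of_def by auto
  then have "tf g c = w \<otimes> r \<otimes> inv r" using tfw by simp
  also have "\<dots> = w" using wc rc by (simp add: m_assoc)
  finally show ?thesis using wZ by simp
qed

definition PP where "PP = finprod (G\<lparr>carrier := H\<rparr>) (tf g) (rcosets H - {H})"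

lemma PP_center: "PP \<in> center_of G"
  unfolding PP_def using fin_rc tf_g_other by (intro finprod_center) auto

lemma V_g: "V g = g \<otimes> PP"
proof -
  interpret Hc: comm_group "G\<lparr>carrier := H\<rparr>" using Hcg .
  have HH: "H \<in> rcosets H" using rcosetsI[OF HS one_closed] HS by simp
  have e: "rcosets H = insert H (rcosets H - {H})" using HH by auto
  have f: "tf g \<in> (rcosets H - {H}) \<rightarrow> carrier (G\<lparr>carrier := H\<rparr>)" using tf_fun[of "rcosets H - {H}"] gc by auto
  have fH: "tf g H \<in> carrier (G\<lparr>carrier := H\<rparr>)" using tf_g_H gH by simp
  have "V g = finprod (G\<lparr>carrier := H\<rparr>) (tf g) (insert H (rcosets H - {H}))"
    unfolding V_def using e by simp
  also have "\<dots> = tf g H \<otimes> PP" unfolding PP_def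
    using Hc.finprod_insert[OF _ _ f fH] fin_rc by simp
  finally show ?thesis using tf_g_H by simp
qed

end


context cmax begin

definition MM where "MM = {y \<in> carrier G. V y \<in> center_of G}"

lemma Vgh: "group_hom G G V"
  using V_hom by (simp add: group_hom.intro group_hom_axioms.intro is_group)

lemma Zc: "z \<in> center_of G \<Longrightarrow> z \<in> carrier G" unfolding center_of_def by auto
lemma Zcomm: "z \<in> center_of G \<Longrightarrow> y \<in> carrier G \<Longrightarrow> z \<otimes> y = y \<otimes> z"
  unfolding center_of_def by auto

lemma PPc: "PP \<in> carrier G" using PP_center Zc by simp

lemma V_pow: "V (g [^] (k::int)) = g [^] k \<otimes> PP [^] k"
proof -
  interpret Vh: group_hom G G V using Vgh .
  have "V (g [^] k) = (V g) [^] k" using Vh.hom_int_pow gc by simp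
  also have "\<dots> = (g \<otimes> PP) [^] k" using V_g by simp
  also have "\<dots> = g [^] k \<otimes> PP [^] k"
    using int_pow_mult_distrib[OF _ gc PPc] Zcomm[OF PP_center gc] by simp
  finally show ?thesis .
qed

lemma PPk: "PP [^] (k::int) \<in> center_of G"
  using subgroup_int_pow_closed[OF center_subgroup PP_center] .

lemma M_sub: "subgroup MM G"
proof -
  interpret Vh: group_hom G G V using Vgh .
  have Vc: "V x \<in> carrier G" if "x \<in> carrier G" for x using that V_in HS by auto
  show ?thesis
  proof (rule subgroupI)
    show "MM \<subseteq> carrier G" unfolding MM_def by auto
    have "\<one> \<in> MM" unfolding MM_def using subgroup.one_closed[OF center_subgroup] by simp
    then show "MM \<noteq> {}" by blast
    show "inv x \<in> MM" if "x \<in> MM" for x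
      using that subgroup.m_inv_closed[OF center_subgroup] unfolding MM_def by auto
    show "x \<otimes> y \<in> MM" if "x \<in> MM" "y \<in> MM" for x y
      using that subgroup.m_closed[OF center_subgroup] unfolding MM_def by auto
  qed
qed

lemma MS: "MM \<subseteq> carrier G" unfolding MM_def by auto

lemma M_conj:
  assumes x: "x \<in> carrier G" and m: "m \<in> MM"
  shows "x \<otimes> m \<otimes> inv x \<in> MM"
proof -
  interpret Vh: group_hom G G V using Vgh .
  have mc: "m \<in> carrier G" and Vm: "V m \<in> center_of G" using m MM_def by auto
  have Vx: "V x \<in> carrier G" using V_in x HS by auto
  have "V (x \<otimes> m \<otimes> inv x) = V x \<otimes> V m \<otimes> inv (V x)" using x mc by simp
  also have "\<dots> = V m \<otimes> V x \<otimes> inv (V x)" using Zcomm[OF Vm Vx] by simp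
  also have "\<dots> = V m" using Vx Zc[OF Vm] by (simp add: m_assoc)
  finally show ?thesis using Vm x mc unfolding MM_def by simp
qed

lemma Z_M: "center_of G \<subseteq> MM"
proof
  fix z assume z: "z \<in> center_of G"
  then have "z \<in> H" using center_sub by auto
  then obtain k where k: "z = g [^] (k::int)" using Hcases by blast
  have "V z = z \<otimes> PP [^] k" using V_pow k by simp
  then have "V z \<in> center_of G" using subgroup.m_closed[OF center_subgroup z PPk] by simp
  then show "z \<in> MM" using z Zc unfolding MM_def by simp
qed

lemma HM_Z:
  assumes h: "h \<in> H" "h \<in> MM"
  shows "h \<in> center_of G"
proof -
  obtain k where k: "h = g [^] (k::int)" using Hcases h(1) by blast
  have hc: "h \<in> carrier G" using h HS by auto
  have Vh: "V h = h \<otimes> PP [^] k" using V_pow k by simp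
  have "V h \<in> center_of G" using h(2) MM_def by simp
  then have "V h \<otimes> inv (PP [^] k) \<in> center_of G"
    using subgroup.m_closed[OF center_subgroup] subgroup.m_inv_closed[OF center_subgroup PPk] by simp
  moreover have "V h \<otimes> inv (PP [^] k) = h" using Vh hc PPc by (simp add: m_assoc)
  ultimately show ?thesis by simp
qed

lemma decomp:
  assumes y: "y \<in> carrier G"
  shows "\<exists>m\<in>MM. \<exists>h\<in>H. y = m \<otimes> h"
proof -
  interpret Vh: group_hom G G V using Vgh .
  obtain k where k: "V y = g [^] (k::int)" using V_in[OF y] Hcases by blast
  define m where "m = y \<otimes> inv (g [^] k)"
  have gk: "g [^] k \<in> carrier G" "g [^] k \<in> H" using gc subgroup_int_pow_closed[OF Hsub gH] by auto
  have mc: "m \<in> carrier G" unfolding m_def using y gk by simp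
  have pk: "PP [^] k \<in> carrier G" using PPc by simp
  have "V m = V y \<otimes> inv (V (g [^] k))" unfolding m_def using y gk by simp
  also have "\<dots> = g [^] k \<otimes> inv (g [^] k \<otimes> PP [^] k)" using k V_pow by simp
  also have "g [^] k \<otimes> PP [^] k = PP [^] k \<otimes> g [^] k" using Zcomm[OF PPk gk(1)] by simp
  also have "g [^] k \<otimes> inv (PP [^] k \<otimes> g [^] k) = inv (PP [^] k)"
    using gk pk by (simp add: inv_mult_group m_assoc)
  finally have "V m \<in> center_of G" using subgroup.m_inv_closed[OF center_subgroup PPk] by simp
  then have "m \<in> MM" using mc MM_def by simp
  moreover have "y = m \<otimes> g [^] k" unfolding m_def using y gk by (simp add: m_assoc)
  ultimately show ?thesis using gk by blast
qed

lemma comm_M: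
  assumes a: "a \<in> carrier G" and b: "b \<in> carrier G"
  shows "a \<otimes> b \<otimes> inv a \<otimes> inv b \<in> MM"
proof -
  interpret Vh: group_hom G G V using Vgh .
  have Va: "V a \<in> H" and Vb: "V b \<in> H" using V_in a b by auto
  have Vac: "V a \<in> carrier G" and Vbc: "V b \<in> carrier G" using Va Vb HS by auto
  have "V (a \<otimes> b \<otimes> inv a \<otimes> inv b) = V a \<otimes> V b \<otimes> inv (V a) \<otimes> inv (V b)" using a b by simp
  also have "\<dots> = V b \<otimes> V a \<otimes> inv (V a) \<otimes> inv (V b)" using Hcomm[OF Va Vb] by simp
  also have "\<dots> = \<one>" using Vac Vbc by (simp add: m_assoc)
  finally have "V (a \<otimes> b \<otimes> inv a \<otimes> inv b) \<in> center_of G"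
    using subgroup.one_closed[OF center_subgroup] by simp
  then show ?thesis using a b MM_def by simp
qed

end


context cmax begin

abbreviation "ZZ \<equiv> center_of G"
abbreviation "MG \<equiv> G\<lparr>carrier := MM\<rparr>"
abbreviation "KK \<equiv> MG Mod ZZ"

definition alpha where "alpha C = (\<lambda>m. g \<otimes> m \<otimes> inv g) ` C"

lemma MG_group: "group MG" using subgroup_imp_group[OF M_sub] .

lemma Z_normal_M: "ZZ \<lhd> MG"
proof -
  interpret MGg: group MG using MG_group .
  have s: "subgroup ZZ MG" using subgroup_incl[OF center_subgroup M_sub Z_M] .
  have "\<forall>x\<in>carrier MG. \<forall>h\<in>ZZ. x \<otimes>\<^bsub>MG\<^esub> h \<otimes>\<^bsub>MG\<^esub> inv\<^bsub>MG\<^esub> x \<in> ZZ"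
  proof (intro ballI)
    fix x h assume x: "x \<in> carrier MG" and h: "h \<in> ZZ"
    have xc: "x \<in> carrier G" using x MS by auto
    have "inv\<^bsub>MG\<^esub> x = inv x" using m_inv_consistent[OF M_sub] x by simp
    moreover have "x \<otimes> h \<otimes> inv x = h"
    proof -
      have "x \<otimes> h \<otimes> inv x = h \<otimes> x \<otimes> inv x" using Zcomm[OF h xc] by simp
      also have "\<dots> = h" using Zc[OF h] xc by (simp add: m_assoc)
      finally show ?thesis .
    qed
    ultimately show "x \<otimes>\<^bsub>MG\<^esub> h \<otimes>\<^bsub>MG\<^esub> inv\<^bsub>MG\<^esub> x \<in> ZZ" using h by simp
  qed
  then show ?thesis using MGg.normal_inv_iff s by blast
qed

lemma K_group: "group KK" using normal.factorgroup_is_group[OF Z_normal_M] .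

lemma rcos_MG: "A #>\<^bsub>MG\<^esub> m = A #> m" by (simp add: r_coset_def)

lemma carrier_K: "carrier KK = (\<lambda>m. ZZ #> m) ` MM"
  using carrier_FactGroup[of MG ZZ] rcos_MG by simp

lemma mult_K: "C \<otimes>\<^bsub>KK\<^esub> D = C <#> D" by (simp add: FactGroup_def set_mult_def)

lemma one_K: "\<one>\<^bsub>KK\<^esub> = ZZ" by simp

lemma alpha_coset:
  assumes m: "m \<in> carrier G"
  shows "alpha (ZZ #> m) = ZZ #> (g \<otimes> m \<otimes> inv g)"
proof
  show "alpha (ZZ #> m) \<subseteq> ZZ #> (g \<otimes> m \<otimes> inv g)"
  proof
    fix x assume "x \<in> alpha (ZZ #> m)"
    then obtain z where z: "z \<in> ZZ" "x = g \<otimes> (z \<otimes> m) \<otimes> inv g" unfolding alpha_def r_coset_def by auto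
    have zc: "z \<in> carrier G" using Zc z(1) by simp
    have "g \<otimes> (z \<otimes> m) \<otimes> inv g = (g \<otimes> z) \<otimes> m \<otimes> inv g" using zc m gc by (simp add: m_assoc)
    also have "\<dots> = (z \<otimes> g) \<otimes> m \<otimes> inv g" using Zcomm[OF z(1) gc] by simp
    also have "\<dots> = z \<otimes> (g \<otimes> m \<otimes> inv g)" using zc m gc by (simp add: m_assoc)
    finally show "x \<in> ZZ #> (g \<otimes> m \<otimes> inv g)" using z unfolding r_coset_def by auto
  qed
  show "ZZ #> (g \<otimes> m \<otimes> inv g) \<subseteq> alpha (ZZ #> m)"
  proof
    fix x assume "x \<in> ZZ #> (g \<otimes> m \<otimes> inv g)"
    then obtain z where z: "z \<in> ZZ" "x = z \<otimes> (g \<otimes> m \<otimes> inv g)" unfolding r_coset_def by auto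
    have zc: "z \<in> carrier G" using Zc z(1) by simp
    have "z \<otimes> (g \<otimes> m \<otimes> inv g) = (z \<otimes> g) \<otimes> m \<otimes> inv g" using zc m gc by (simp add: m_assoc)
    also have "\<dots> = (g \<otimes> z) \<otimes> m \<otimes> inv g" using Zcomm[OF z(1) gc] by simp
    also have "\<dots> = g \<otimes> (z \<otimes> m) \<otimes> inv g" using zc m gc by (simp add: m_assoc)
    finally have "x = g \<otimes> (z \<otimes> m) \<otimes> inv g" using z by simp
    moreover have "z \<otimes> m \<in> ZZ #> m" using z(1) unfolding r_coset_def by auto
    ultimately show "x \<in> alpha (ZZ #> m)" unfolding alpha_def by blast
  qed
qed

lemma alpha_mult:
  assumes C: "C \<subseteq> carrier G" and D: "D \<subseteq> carrier G"
  shows "alpha (C <#> D) = alpha C <#> alpha D"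
proof
  show "alpha (C <#> D) \<subseteq> alpha C <#> alpha D"
  proof
    fix x assume "x \<in> alpha (C <#> D)"
    then obtain c d where cd: "c \<in> C" "d \<in> D" "x = g \<otimes> (c \<otimes> d) \<otimes> inv g"
      unfolding alpha_def set_mult_def by auto
    have cc: "c \<in> carrier G" "d \<in> carrier G" using cd C D by auto
    have "x = (g \<otimes> c \<otimes> inv g) \<otimes> (g \<otimes> d \<otimes> inv g)" using cd(3) cc gc by (simp add: m_assoc)
    then show "x \<in> alpha C <#> alpha D" using cd unfolding alpha_def set_mult_def by auto
  qed
  show "alpha C <#> alpha D \<subseteq> alpha (C <#> D)"
  proof
    fix x assume "x \<in> alpha C <#> alpha D"
    then obtain c d where cd: "c \<in> C" "d \<in> D" "x = (g \<otimes> c \<otimes> inv g) \<otimes> (g \<otimes> d \<otimes> inv g)"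
      unfolding alpha_def set_mult_def by auto
    have cc: "c \<in> carrier G" "d \<in> carrier G" using cd C D by auto
    have "x = g \<otimes> (c \<otimes> d) \<otimes> inv g" using cd(3) cc gc by (simp add: m_assoc)
    moreover have "c \<otimes> d \<in> C <#> D" using cd unfolding set_mult_def by auto
    ultimately show "x \<in> alpha (C <#> D)" unfolding alpha_def by blast
  qed
qed

lemma alpha_inv_coset:
  assumes m: "m \<in> carrier G"
  shows "ZZ #> m = alpha (ZZ #> (inv g \<otimes> m \<otimes> g))"
  using alpha_coset[of "inv g \<otimes> m \<otimes> g"] m gc by (simp add: m_assoc)

lemma K_elem:
  assumes "C \<in> carrier KK" obtains m where "m \<in> MM" "C = ZZ #> m"
  using assms carrier_K by auto

lemma alpha_K: "C \<in> carrier KK \<Longrightarrow> alpha C \<in> carrier KK"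
proof -
  assume C: "C \<in> carrier KK"
  obtain m where m: "m \<in> MM" "C = ZZ #> m" using K_elem[OF C] by blast
  have mc: "m \<in> carrier G" using m MS by auto
  have "alpha C = ZZ #> (g \<otimes> m \<otimes> inv g)" using alpha_coset[OF mc] m by simp
  moreover have "g \<otimes> m \<otimes> inv g \<in> MM" using M_conj[OF gc m(1)] .
  ultimately show ?thesis using carrier_K by simp
qed

lemma KS: "C \<in> carrier KK \<Longrightarrow> C \<subseteq> carrier G"
proof -
  assume C: "C \<in> carrier KK"
  obtain m where m: "m \<in> MM" "C = ZZ #> m" using K_elem[OF C] by blast
  then show ?thesis using r_coset_subset_G[of ZZ m] Zc MS by auto
qed

lemma alpha_hom: "alpha \<in> hom KK KK"
proof (rule homI)
  show "\<And>C. C \<in> carrier KK \<Longrightarrow> alpha C \<in> carrier KK" using alpha_K .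
  show "alpha (C \<otimes>\<^bsub>KK\<^esub> D) = alpha C \<otimes>\<^bsub>KK\<^esub> alpha D" if "C \<in> carrier KK" "D \<in> carrier KK" for C D
    using alpha_mult[OF KS KS] that mult_K by simp
qed

lemma alpha_bij: "bij_betw alpha (carrier KK) (carrier KK)"
proof -
  have surj: "alpha ` carrier KK = carrier KK"
  proof
    show "alpha ` carrier KK \<subseteq> carrier KK" using alpha_K by auto
    show "carrier KK \<subseteq> alpha ` carrier KK"
    proof
      fix C assume C: "C \<in> carrier KK"
      obtain m where m: "m \<in> MM" "C = ZZ #> m" using K_elem[OF C] by blast
      have mc: "m \<in> carrier G" using m MS by auto
      have "inv g \<otimes> m \<otimes> inv (inv g) \<in> MM" using M_conj[OF inv_closed[OF gc] m(1)] .
      then have "inv g \<otimes> m \<otimes> g \<in> MM" using gc by simp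
      then have "ZZ #> (inv g \<otimes> m \<otimes> g) \<in> carrier KK" using carrier_K by simp
      moreover have "C = alpha (ZZ #> (inv g \<otimes> m \<otimes> g))" using alpha_inv_coset[OF mc] m by simp
      ultimately show "C \<in> alpha ` carrier KK" by blast
    qed
  qed
  have fin: "finite (carrier KK)" unfolding carrier_K using finite_subset[OF MS fin] by simp
  have "inj_on alpha (carrier KK)" by (rule eq_card_imp_inj_on[OF fin]) (simp add: surj)
  then show ?thesis using surj unfolding bij_betw_def by simp
qed

end


context cmax begin

lemma Z_normal_G: "ZZ \<lhd> G"
proof -
  have "\<forall>x\<in>carrier G. \<forall>h\<in>ZZ. x \<otimes> h \<otimes> inv x \<in> ZZ"
  proof (intro ballI)
    fix x h assume xc: "x \<in> carrier G" and h: "h \<in> ZZ"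
    have "x \<otimes> h \<otimes> inv x = h \<otimes> x \<otimes> inv x" using Zcomm[OF h xc] by simp
    also have "\<dots> = h" using Zc[OF h] xc by (simp add: m_assoc)
    finally show "x \<otimes> h \<otimes> inv x \<in> ZZ" using h by simp
  qed
  then show ?thesis using normal_inv_iff center_subgroup by blast
qed

lemma coset_sum: "a \<in> carrier G \<Longrightarrow> b \<in> carrier G \<Longrightarrow> (ZZ #> a) <#> (ZZ #> b) = ZZ #> (a \<otimes> b)"
  using normal.rcos_sum[OF Z_normal_G] by simp

lemma alpha_fpf:
  assumes C: "C \<in> carrier KK" and e: "alpha C = C"
  shows "C = \<one>\<^bsub>KK\<^esub>"
proof -
  obtain m where m: "m \<in> MM" "C = ZZ #> m" using K_elem[OF C] by blast
  have mc: "m \<in> carrier G" using m MS by auto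
  have gmc: "g \<otimes> m \<otimes> inv g \<in> carrier G" using gc mc by simp
  have "ZZ #> (g \<otimes> m \<otimes> inv g) = ZZ #> m" using alpha_coset[OF mc] e m by simp
  moreover have "g \<otimes> m \<otimes> inv g \<in> ZZ #> (g \<otimes> m \<otimes> inv g)" using rcos_self[OF gmc center_subgroup] .
  ultimately have "g \<otimes> m \<otimes> inv g \<in> ZZ #> m" by simp
  then have zZ: "g \<otimes> m \<otimes> inv g \<otimes> inv m \<in> ZZ"
    using subgroup.rcos_module_imp[OF center_subgroup is_group mc] by simp
  define z where "z = g \<otimes> m \<otimes> inv g \<otimes> inv m"
  have zc: "z \<in> carrier G" unfolding z_def using gc mc by simp
  have gm: "g \<otimes> m = z \<otimes> m \<otimes> g" unfolding z_def using gc mc by (simp add: m_assoc)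
  have "inv m \<otimes> g \<otimes> m = inv m \<otimes> (g \<otimes> m)" using gc mc by (simp add: m_assoc)
  also have "\<dots> = inv m \<otimes> (z \<otimes> m \<otimes> g)" by (simp only: gm)
  also have "z \<otimes> m = m \<otimes> z" using Zcomm[OF zZ[folded z_def] mc] .
  also have "inv m \<otimes> (m \<otimes> z \<otimes> g) = z \<otimes> g" using mc zc gc by (simp add: m_assoc)
  finally have e2: "inv m \<otimes> g \<otimes> m = z \<otimes> g" .
  have "z \<otimes> g \<in> H" using center_sub zZ[folded z_def] gH Hsub by (auto intro: subgroup.m_closed)
  then have inH: "inv m \<otimes> g \<otimes> m \<in> H" using e2 by simp
  have "m \<in> H"
  proof (rule ccontr)
    assume "m \<notin> H"
    then have "g \<in> ZZ" using key[OF mc _ gH inH] by simp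
    then show False using g_not_center by simp
  qed
  then have "m \<in> ZZ" using HM_Z m(1) by simp
  then have "ZZ #> m = ZZ" using subgroup.rcos_const[OF center_subgroup is_group] by simp
  then show ?thesis using m by simp
qed

lemma alpha_simple:
  assumes L: "subgroup L KK" and aL: "alpha ` L = L"
  shows "L = {\<one>\<^bsub>KK\<^esub>} \<or> L = carrier KK"
proof -
  interpret K: group KK using K_group .
  have LK: "L \<subseteq> carrier KK" using L subgroup.subset by auto
  have ZL: "ZZ \<in> L" using subgroup.one_closed[OF L] by simp
  define Lt where "Lt = \<Union> L"
  have CM: "C \<subseteq> MM" if CK: "C \<in> carrier KK" for C
  proof
    fix x assume x: "x \<in> C"
    obtain m where m: "m \<in> MM" "C = ZZ #> m" using K_elem[OF CK] by blast
    then obtain z where "z \<in> ZZ" "x = z \<otimes> m" using x unfolding r_coset_def by auto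
    then show "x \<in> MM" using Z_M m(1) M_sub by (auto intro: subgroup.m_closed)
  qed
  have LtM: "Lt \<subseteq> MM" unfolding Lt_def using CM LK by blast
  have ZLt: "ZZ \<subseteq> Lt" unfolding Lt_def using ZL by blast
  have LtS: "subgroup Lt G"
  proof (rule subgroupI)
    show "Lt \<subseteq> carrier G" using LtM MS by auto
    show "Lt \<noteq> {}" using ZLt subgroup.one_closed[OF center_subgroup] by blast
    show "a \<otimes> b \<in> Lt" if a: "a \<in> Lt" and b: "b \<in> Lt" for a b
    proof -
      obtain C where C: "C \<in> L" "a \<in> C" using a Lt_def by auto
      obtain D where D: "D \<in> L" "b \<in> D" using b Lt_def by auto
      have "a \<otimes> b \<in> C <#> D" using C D unfolding set_mult_def by auto
      moreover have "C <#> D \<in> L" using subgroup.m_closed[OF L C(1) D(1)] mult_K by simp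
      ultimately show ?thesis unfolding Lt_def by blast
    qed
    show "inv a \<in> Lt" if a: "a \<in> Lt" for a
    proof -
      obtain C where C: "C \<in> L" "a \<in> C" using a Lt_def by auto
      have CK: "C \<in> carrier KK" using C LK by auto
      obtain m where m: "m \<in> MM" "C = ZZ #> m" using K_elem[OF CK] by blast
      have mc: "m \<in> carrier G" using m MS by auto
      define D where "D = ZZ #> inv m"
      have DK: "D \<in> carrier KK" unfolding D_def using carrier_K subgroup.m_inv_closed[OF M_sub m(1)] by simp
      have ZS: "ZZ \<subseteq> carrier G" using Zc by auto
      have "D \<otimes>\<^bsub>KK\<^esub> C = ZZ #> (inv m \<otimes> m)" unfolding mult_K D_def m(2) using coset_sum[of "inv m" m] mc by simp
      also have "\<dots> = ZZ" using mc coset_mult_one[OF ZS] by simp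
      finally have "D \<otimes>\<^bsub>KK\<^esub> C = \<one>\<^bsub>KK\<^esub>" by simp
      then have "inv\<^bsub>KK\<^esub> C = D" using K.inv_equality CK DK by blast
      then have DL: "D \<in> L" using subgroup.m_inv_closed[OF L C(1)] by simp
      obtain z where z: "z \<in> ZZ" "a = z \<otimes> m" using C(2) m(2) unfolding r_coset_def by auto
      have zc: "z \<in> carrier G" using Zc z(1) by simp
      have "inv a = inv m \<otimes> inv z" using z(2) zc mc by (simp add: inv_mult_group)
      also have "\<dots> = inv z \<otimes> inv m" using Zcomm[OF subgroup.m_inv_closed[OF center_subgroup z(1)]] mc by simp
      finally have "inv a \<in> D" unfolding D_def r_coset_def using subgroup.m_inv_closed[OF center_subgroup z(1)] by auto
      then show ?thesis using DL Lt_def by auto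
    qed
  qed
  have invg: "g \<otimes> l \<otimes> inv g \<in> Lt" if l: "l \<in> Lt" for l
  proof -
    obtain C where C: "C \<in> L" "l \<in> C" using l Lt_def by auto
    have "g \<otimes> l \<otimes> inv g \<in> alpha C" using C(2) unfolding alpha_def by blast
    moreover have "alpha C \<in> L" using aL C(1) by blast
    ultimately show ?thesis unfolding Lt_def by blast
  qed
  have invg': "inv g \<otimes> l \<otimes> g \<in> Lt" if l: "l \<in> Lt" for l
  proof -
    obtain C where C: "C \<in> L" "l \<in> C" using l Lt_def by auto
    then obtain C' where C': "C' \<in> L" "C = alpha C'" using aL by blast
    then obtain c where c: "c \<in> C'" "l = g \<otimes> c \<otimes> inv g" using C(2) unfolding alpha_def by auto
    have "c \<in> carrier G" using c(1) C' LK KS by blast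
    then have "inv g \<otimes> l \<otimes> g = c" using c(2) gc by (simp add: m_assoc)
    then show ?thesis using c(1) C'(1) Lt_def by auto
  qed
  have LtS': "Lt \<subseteq> carrier G" using LtM MS by auto
  have powinv: "\<forall>l\<in>Lt. g [^] k \<otimes> l \<otimes> inv (g [^] k) \<in> Lt" for k :: int
  proof (induction k rule: int_induct[where k=0])
    case base
    show ?case using LtS' by auto
  next
    case (step1 i)
    show ?case
    proof
      fix l assume l: "l \<in> Lt"
      have lc: "l \<in> carrier G" using l LtS' by auto
      have gi: "g [^] i \<in> carrier G" using gc by simp
      have "g [^] (i + 1) = g [^] i \<otimes> g" using gc by (simp add: int_pow_mult)
      then have "g [^] (i + 1) \<otimes> l \<otimes> inv (g [^] (i + 1)) = g [^] i \<otimes> (g \<otimes> l \<otimes> inv g) \<otimes> inv (g [^] i)"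
        using gi gc lc by (simp add: m_assoc inv_mult_group)
      then show "g [^] (i + 1) \<otimes> l \<otimes> inv (g [^] (i + 1)) \<in> Lt" using step1.IH invg[OF l] by simp
    qed
  next
    case (step2 i)
    show ?case
    proof
      fix l assume l: "l \<in> Lt"
      have lc: "l \<in> carrier G" using l LtS' by auto
      have gi: "g [^] i \<in> carrier G" using gc by simp
      have "g [^] (i - 1) = g [^] i \<otimes> inv g" using gc by (simp add: int_pow_diff)
      then have "g [^] (i - 1) \<otimes> l \<otimes> inv (g [^] (i - 1)) = g [^] i \<otimes> (inv g \<otimes> l \<otimes> g) \<otimes> inv (g [^] i)"
        using gi gc lc by (simp add: m_assoc inv_mult_group)
      then show "g [^] (i - 1) \<otimes> l \<otimes> inv (g [^] (i - 1)) \<in> Lt" using step2.IH invg'[OF l] by simp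
    qed
  qed
  have conjH: "h \<otimes> l \<otimes> inv h \<in> Lt" if h: "h \<in> H" and l: "l \<in> Lt" for h l
  proof -
    obtain k where "h = g [^] (k::int)" using Hcases h by blast
    then show ?thesis using powinv[of k] l by simp
  qed
  define S where "S = {y. \<exists>l\<in>Lt. \<exists>h\<in>H. y = l \<otimes> h}"
  have HSS: "H \<subseteq> S"
  proof
    fix h assume h: "h \<in> H"
    have "\<one> \<in> Lt" using subgroup.one_closed[OF LtS] .
    moreover have "h = \<one> \<otimes> h" using h HS by auto
    ultimately show "h \<in> S" unfolding S_def using h by blast
  qed
  have SS: "subgroup S G"
  proof (rule subgroupI)
    show "S \<subseteq> carrier G" unfolding S_def using LtS' HS by auto
    show "S \<noteq> {}" using HSS gH by blast
    show "inv y \<in> S" if y: "y \<in> S" for y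
    proof -
      obtain l h where lh: "l \<in> Lt" "h \<in> H" "y = l \<otimes> h" using y S_def by auto
      have lc: "l \<in> carrier G" and hc: "h \<in> carrier G" using lh LtS' HS by auto
      have ih: "inv h \<in> H" using lh(2) Hsub by (simp add: subgroup.m_inv_closed)
      have il: "inv l \<in> Lt" using lh(1) LtS by (simp add: subgroup.m_inv_closed)
      have "inv y = (inv h \<otimes> inv l \<otimes> inv (inv h)) \<otimes> inv h" using lh(3) lc hc by (simp add: m_assoc inv_mult_group)
      moreover have "inv h \<otimes> inv l \<otimes> inv (inv h) \<in> Lt" using conjH[OF ih il] .
      ultimately show ?thesis unfolding S_def using ih by blast
    qed
    show "y \<otimes> w \<in> S" if y: "y \<in> S" and w: "w \<in> S" for y w
    proof -
      obtain l1 h1 where 1: "l1 \<in> Lt" "h1 \<in> H" "y = l1 \<otimes> h1" using y S_def by auto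
      obtain l2 h2 where 2: "l2 \<in> Lt" "h2 \<in> H" "w = l2 \<otimes> h2" using w S_def by auto
      have c: "l1 \<in> carrier G" "h1 \<in> carrier G" "l2 \<in> carrier G" "h2 \<in> carrier G"
        using 1 2 LtS' HS by auto
      have "y \<otimes> w = (l1 \<otimes> (h1 \<otimes> l2 \<otimes> inv h1)) \<otimes> (h1 \<otimes> h2)"
        using 1(3) 2(3) c by (simp add: m_assoc)
      moreover have "l1 \<otimes> (h1 \<otimes> l2 \<otimes> inv h1) \<in> Lt"
        using conjH[OF 1(2) 2(1)] 1(1) LtS by (simp add: subgroup.m_closed)
      moreover have "h1 \<otimes> h2 \<in> H" using 1(2) 2(2) Hsub by (simp add: subgroup.m_closed)
      ultimately show ?thesis unfolding S_def by blast
    qed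
  qed
  show ?thesis
  proof (cases "S = H")
    case True
    have "Lt \<subseteq> ZZ"
    proof
      fix l assume l: "l \<in> Lt"
      have "l = l \<otimes> \<one>" using l LtS' by auto
      then have "l \<in> S" unfolding S_def using l subgroup.one_closed[OF Hsub] by blast
      then show "l \<in> ZZ" using True HM_Z l LtM by auto
    qed
    have "L = {\<one>\<^bsub>KK\<^esub>}"
    proof
      show "{\<one>\<^bsub>KK\<^esub>} \<subseteq> L" using ZL by simp
      show "L \<subseteq> {\<one>\<^bsub>KK\<^esub>}"
      proof
        fix C assume C: "C \<in> L"
        obtain m where m: "m \<in> MM" "C = ZZ #> m" using K_elem C LK by blast
        have mc: "m \<in> carrier G" using m MS by auto
        have "m \<in> C" using m(2) rcos_self[OF mc center_subgroup] by simp
        then have "m \<in> ZZ" using C \<open>Lt \<subseteq> ZZ\<close> Lt_def by auto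
        then have "C = ZZ" using m(2) subgroup.rcos_const[OF center_subgroup is_group] by simp
        then show "C \<in> {\<one>\<^bsub>KK\<^esub>}" by simp
      qed
    qed
    then show ?thesis by simp
  next
    case False
    then have SG: "S = carrier G" using Hmax[OF SS HSS] by simp
    have MLt: "MM \<subseteq> Lt"
    proof
      fix m assume m: "m \<in> MM"
      then have "m \<in> S" using SG MS by auto
      then obtain l h where lh: "l \<in> Lt" "h \<in> H" "m = l \<otimes> h" unfolding S_def by auto
      have lc: "l \<in> carrier G" and hc: "h \<in> carrier G" using lh LtS' HS by auto
      have "h = inv l \<otimes> m" using lh(3) lc hc by simp
      moreover have "inv l \<in> MM" using lh(1) LtM M_sub by (auto intro: subgroup.m_inv_closed)
      ultimately have "h \<in> MM" using m M_sub by (simp add: subgroup.m_closed)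
      then have "h \<in> ZZ" using HM_Z lh(2) by simp
      then have "h \<in> Lt" using ZLt by auto
      then show "m \<in> Lt" using lh LtS by (simp add: subgroup.m_closed)
    qed
    have "carrier KK \<subseteq> L"
    proof
      fix C assume C: "C \<in> carrier KK"
      obtain m where m: "m \<in> MM" "C = ZZ #> m" using K_elem[OF C] by blast
      have mc: "m \<in> carrier G" using m MS by auto
      have "m \<in> Lt" using MLt m by auto
      then obtain C' where C': "C' \<in> L" "m \<in> C'" using Lt_def by auto
      obtain m' where m': "m' \<in> MM" "C' = ZZ #> m'" using K_elem C'(1) LK by blast
      have "ZZ #> m' = ZZ #> m" using repr_independence[of m ZZ m'] C'(2) m' MS center_subgroup by auto
      then show "C \<in> L" using C' m m' by simp
    qed
    then show ?thesis using LK by blast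
  qed
qed

lemma M_comm:
  assumes a: "a \<in> MM" and b: "b \<in> MM"
  shows "a \<otimes> b \<otimes> inv a \<otimes> inv b \<in> ZZ"
proof -
  interpret K: group KK using K_group .
  have finK: "finite (carrier KK)" unfolding carrier_K using finite_subset[OF MS fin] by simp
  have "\<forall>x\<in>carrier KK. \<forall>y\<in>carrier KK. x \<otimes>\<^bsub>KK\<^esub> y = y \<otimes>\<^bsub>KK\<^esub> x"
    by (rule K.fpf_simple_comm[OF finK alpha_hom alpha_bij alpha_fpf alpha_simple]) auto
  moreover have "ZZ #> a \<in> carrier KK" "ZZ #> b \<in> carrier KK" using a b carrier_K by auto
  ultimately have "(ZZ #> a) <#> (ZZ #> b) = (ZZ #> b) <#> (ZZ #> a)" using mult_K by metis
  moreover have ac: "a \<in> carrier G" and bc: "b \<in> carrier G" using a b MS by auto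
  ultimately have "ZZ #> (a \<otimes> b) = ZZ #> (b \<otimes> a)" using coset_sum by simp
  then have "(a \<otimes> b) \<otimes> inv (b \<otimes> a) \<in> ZZ" using rcos_eq_iff[OF center_subgroup] ac bc by simp
  moreover have "(a \<otimes> b) \<otimes> inv (b \<otimes> a) = a \<otimes> b \<otimes> inv a \<otimes> inv b"
    using ac bc by (simp add: inv_mult_group m_assoc)
  ultimately show ?thesis by simp
qed

end


lemma (in group) normal_max_comm:
  assumes N: "H \<lhd> G" and Hne: "H \<noteq> carrier G"
    and Hmax: "\<And>K. subgroup K G \<Longrightarrow> H \<subseteq> K \<Longrightarrow> K = H \<or> K = carrier G"
    and x: "x \<in> carrier G" and y: "y \<in> carrier G"
  shows "x \<otimes> y \<otimes> inv x \<otimes> inv y \<in> H"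
proof -
  have Hsub: "subgroup H G" and cj: "\<And>u h. u \<in> carrier G \<Longrightarrow> h \<in> H \<Longrightarrow> u \<otimes> h \<otimes> inv u \<in> H"
    using N normal_inv_iff by auto
  have HS: "H \<subseteq> carrier G" using Hsub subgroup.subset by auto
  obtain a where a: "a \<in> carrier G" "a \<notin> H" using Hne HS by blast
  define S where "S = {h \<otimes> a [^] (k::int) | h k. h \<in> H}"
  have Sc: "s \<in> S \<Longrightarrow> s \<in> carrier G" for s unfolding S_def using HS a(1) by auto
  have SS: "subgroup S G"
  proof (rule subgroupI)
    show "S \<subseteq> carrier G" using Sc by auto
    have "\<one> \<otimes> a [^] (0::int) \<in> S" unfolding S_def using subgroup.one_closed[OF Hsub] by blast
    then show "S \<noteq> {}" by blast
    show "inv s \<in> S" if s: "s \<in> S" for s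
    proof -
      obtain h k where hk: "h \<in> H" "s = h \<otimes> a [^] (k::int)" using s S_def by auto
      have hc: "h \<in> carrier G" using hk HS by auto
      have ak: "a [^] (-k) \<in> carrier G" using a by simp
      have "inv s = a [^] (-k) \<otimes> inv h" using hk(2) hc a by (simp add: inv_mult_group int_pow_neg)
      also have "\<dots> = (a [^] (-k) \<otimes> inv h \<otimes> inv (a [^] (-k))) \<otimes> a [^] (-k)"
        using ak hc by (simp add: m_assoc)
      finally have "inv s = (a [^] (-k) \<otimes> inv h \<otimes> inv (a [^] (-k))) \<otimes> a [^] (-k)" .
      moreover have "a [^] (-k) \<otimes> inv h \<otimes> inv (a [^] (-k)) \<in> H"
        using cj[OF ak] hk(1) Hsub by (simp add: subgroup.m_inv_closed)
      ultimately show ?thesis unfolding S_def by blast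
    qed
    show "s \<otimes> t \<in> S" if s: "s \<in> S" and t: "t \<in> S" for s t
    proof -
      obtain h1 i where 1: "h1 \<in> H" "s = h1 \<otimes> a [^] (i::int)" using s S_def by auto
      obtain h2 j where 2: "h2 \<in> H" "t = h2 \<otimes> a [^] (j::int)" using t S_def by auto
      have c: "h1 \<in> carrier G" "h2 \<in> carrier G" "a [^] i \<in> carrier G" "a [^] j \<in> carrier G"
        using 1 2 HS a by auto
      have "s \<otimes> t = (h1 \<otimes> (a [^] i \<otimes> h2 \<otimes> inv (a [^] i))) \<otimes> (a [^] i \<otimes> a [^] j)"
        using 1(2) 2(2) c by (simp add: m_assoc)
      also have "a [^] i \<otimes> a [^] j = a [^] (i + j)" using a by (simp add: int_pow_mult)
      finally have "s \<otimes> t = (h1 \<otimes> (a [^] i \<otimes> h2 \<otimes> inv (a [^] i))) \<otimes> a [^] (i + j)" .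
      moreover have "h1 \<otimes> (a [^] i \<otimes> h2 \<otimes> inv (a [^] i)) \<in> H"
        using cj[OF c(3) 2(1)] 1(1) Hsub by (simp add: subgroup.m_closed)
      ultimately show ?thesis unfolding S_def by blast
    qed
  qed
  have HSS: "H \<subseteq> S"
  proof
    fix h assume h: "h \<in> H"
    then have "h = h \<otimes> a [^] (0::int)" using HS by auto
    then show "h \<in> S" unfolding S_def using h by blast
  qed
  have "a = \<one> \<otimes> a [^] (1::int)" using a by simp
  then have "a \<in> S" unfolding S_def using subgroup.one_closed[OF Hsub] by blast
  then have "S \<noteq> H" using a by blast
  then have SG: "S = carrier G" using Hmax[OF SS HSS] by simp
  have "x \<in> S" "y \<in> S" using x y SG by auto
  then obtain h1 i h2 j where 1: "h1 \<in> H" "x = h1 \<otimes> a [^] (i::int)"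
    and 2: "h2 \<in> H" "y = h2 \<otimes> a [^] (j::int)" unfolding S_def by blast
  have c: "h1 \<in> carrier G" "h2 \<in> carrier G" "a [^] i \<in> carrier G" "a [^] j \<in> carrier G"
    using 1 2 HS a by auto
  define u where "u = h1 \<otimes> (a [^] i \<otimes> h2 \<otimes> inv (a [^] i))"
  define v where "v = h2 \<otimes> (a [^] j \<otimes> h1 \<otimes> inv (a [^] j))"
  have uH: "u \<in> H" unfolding u_def using cj[OF c(3) 2(1)] 1(1) Hsub by (simp add: subgroup.m_closed)
  have vH: "v \<in> H" unfolding v_def using cj[OF c(4) 1(1)] 2(1) Hsub by (simp add: subgroup.m_closed)
  have uc: "u \<in> carrier G" and vc: "v \<in> carrier G" using uH vH HS by auto
  have e: "a [^] i \<otimes> a [^] j = a [^] j \<otimes> a [^] i"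
    using a by (simp add: int_pow_mult[symmetric] add.commute)
  have aij: "a [^] i \<otimes> a [^] j \<in> carrier G" using c by simp
  have xy: "x \<otimes> y = u \<otimes> (a [^] i \<otimes> a [^] j)" unfolding u_def using 1(2) 2(2) c by (simp add: m_assoc)
  have yx: "y \<otimes> x = v \<otimes> (a [^] i \<otimes> a [^] j)" unfolding v_def e using 1(2) 2(2) c by (simp add: m_assoc)
  have "x \<otimes> y \<otimes> inv x \<otimes> inv y = (x \<otimes> y) \<otimes> inv (y \<otimes> x)" using x y by (simp add: m_assoc inv_mult_group)
  also have "\<dots> = u \<otimes> inv v" unfolding xy yx using uc vc aij by (simp add: m_assoc inv_mult_group)
  finally show ?thesis using uH vH Hsub by (simp add: subgroup.m_closed subgroup.m_inv_closed)
qed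

lemma (in group) derived_comm_trivial:
  assumes "\<And>a b. a \<in> A \<Longrightarrow> b \<in> A \<Longrightarrow> a \<otimes> b = b \<otimes> a" "A \<subseteq> carrier G"
  shows "derived G A \<subseteq> {\<one>}"
proof -
  have "derived_set G A \<subseteq> {\<one>}"
  proof
    fix x assume "x \<in> derived_set G A"
    then obtain a b where ab: "a \<in> A" "b \<in> A" "x = a \<otimes> b \<otimes> inv a \<otimes> inv b" by auto
    have c: "a \<in> carrier G" "b \<in> carrier G" using ab assms(2) by auto
    have "x = b \<otimes> a \<otimes> inv a \<otimes> inv b" using ab assms(1) by simp
    also have "\<dots> = \<one>" using c by (simp add: m_assoc)
    finally show "x \<in> {\<one>}" by simp
  qed
  then have "derived G A \<subseteq> generate G {\<one>}" unfolding derived_def by (rule mono_generate)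
  then show ?thesis using generate_one by simp
qed

lemma (in group) range_pow_comm:
  assumes "g \<in> carrier G" "a \<in> range (\<lambda>n::int. g [^] n)" "b \<in> range (\<lambda>n::int. g [^] n)"
  shows "a \<otimes> b = b \<otimes> a"
proof -
  obtain i j where "a = g [^] (i::int)" "b = g [^] (j::int)" using assms by auto
  then show ?thesis using assms(1) by (simp add: int_pow_mult[symmetric] add.commute)
qed

lemma center_of_one: "group G \<Longrightarrow> \<one>\<^bsub>G\<^esub> \<in> center_of G"
  unfolding center_of_def by (simp add: group.is_monoid monoid.l_one monoid.r_one)

theorem proposition2p4:
  fixes G (structure)
  assumes "group G"
    and "finite (carrier G)"
    and "\<exists>H. maximal_subgroup H G \<and> cyclic_group (G\<lparr>carrier := H\<rparr>)"
  shows "solvable G \<and> derived G (derived G (carrier G)) \<subseteq> center_of G"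
proof -
  interpret group G using assms(1) .
  obtain H where mx: "maximal_subgroup H G" and cy: "cyclic_group (G\<lparr>carrier := H\<rparr>)" using assms(3) by blast
  have Hsub: "subgroup H G" and Hne: "H \<noteq> carrier G"
    and Hmax: "\<And>K. subgroup K G \<Longrightarrow> H \<subseteq> K \<Longrightarrow> K = H \<or> K = carrier G"
    using mx unfolding maximal_subgroup_def by auto
  have HS: "H \<subseteq> carrier G" using Hsub subgroup.subset by auto
  interpret Hg: group "G\<lparr>carrier := H\<rparr>" using subgroup_imp_group[OF Hsub] .
  obtain g where gH: "g \<in> H" and Hg': "H = range (\<lambda>n::int. g [^]\<^bsub>G\<lparr>carrier := H\<rparr>\<^esub> n)"
    using Hg.cyclic_group cy by auto
  have Hg: "H = range (\<lambda>n::int. g [^] n)" using Hg' int_pow_consistent[OF Hsub gH] by simp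
  have gc: "g \<in> carrier G" using gH HS by auto
  have D1c: "derived G (carrier G) \<subseteq> carrier G" using derived_incl[OF subset_refl subgroup_self] .
  have sub1: "subgroup (derived G (carrier G)) G" using derived_is_subgroup by simp
  have sub2: "subgroup (derived G (derived G (carrier G))) G" using derived_is_subgroup D1c by simp
  have D2c: "derived G (derived G (carrier G)) \<subseteq> carrier G" using sub2 subgroup.subset by auto
  show ?thesis
  proof (cases "H \<lhd> G")
    case True
    have "derived_set G (carrier G) \<subseteq> H" using normal_max_comm[OF True Hne Hmax] by auto
    then have D1: "derived G (carrier G) \<subseteq> H" unfolding derived_def using generate_subgroup_incl[OF _ Hsub] by simp
    have "derived G H \<subseteq> {\<one>}"
      by (rule derived_comm_trivial) (use range_pow_comm[OF gc] Hg HS in auto)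
    then have D2: "derived G (derived G (carrier G)) \<subseteq> {\<one>}" using mono_derived[OF D1] by auto
    then have "derived G (derived G (carrier G)) = {\<one>}" using subgroup.one_closed[OF sub2] by auto
    then have "(derived G ^^ 2) (carrier G) = {\<one>}" by (simp add: numeral_2_eq_2)
    then have "solvable G" using solvable_iff_trivial_derived_seq by blast
    moreover have "derived G (derived G (carrier G)) \<subseteq> center_of G" using D2 center_of_one assms(1) by auto
    ultimately show ?thesis by simp
  next
    case False
    have cmx: "cmax G H g"
      by (rule cmax.intro[OF is_group cmax_axioms.intro]) (use assms(2) Hsub Hne Hmax gc Hg False in auto)
    interpret cm: cmax G H g using cmx .
    have "derived_set G (carrier G) \<subseteq> cm.MM" using cm.comm_M by auto
    then have D1: "derived G (carrier G) \<subseteq> cm.MM" unfolding derived_def using generate_subgroup_incl[OF _ cm.M_sub] by simp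
    have "derived_set G cm.MM \<subseteq> center_of G" using cm.M_comm by auto
    then have "derived G cm.MM \<subseteq> center_of G" unfolding derived_def using generate_subgroup_incl[OF _ cm.center_subgroup] by simp
    then have D2: "derived G (derived G (carrier G)) \<subseteq> center_of G" using mono_derived[OF D1] by auto
    have "derived G (center_of G) \<subseteq> {\<one>}"
      by (rule derived_comm_trivial) (use cm.Zcomm cm.Zc in auto)
    then have "derived G (derived G (derived G (carrier G))) \<subseteq> {\<one>}" using mono_derived[OF D2] by auto
    moreover have "subgroup (derived G (derived G (derived G (carrier G)))) G" using derived_is_subgroup D2c by simp
    ultimately have "derived G (derived G (derived G (carrier G))) = {\<one>}" using subgroup.one_closed by auto
    then have "(derived G ^^ 3) (carrier G) = {\<one>}" by (simp add: numeral_3_eq_3)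
    then have "solvable G" using solvable_iff_trivial_derived_seq by blast
    then show ?thesis using D2 by simp
  qed
qed

end
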